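(* Let $W(\mathbf{Q})$ be the Witt group of nonsingular symmetric bilinear forms over $\mathbf{Q}$. For every $w \in W(\mathbf{Q})$, $\rho(4w) = 4|\sigma(w)|$, where $\sigma$ denotes the signature.
   Context: For a class $w$ in a Witt group, the rank $\rho(w)$ is the minimum dimension of a square (symmetric/hermitian) matrix representing $w$. The signature $\sigma(w)$ is the signature of any real symmetric matrix representing $w$ (it is a Witt invariant). *)

theory Defs
  imports "Jordan_Normal_Form.Char_Poly"
begin

text \<open>Symmetric bilinear forms over Q are represented by their Gram matrices (rat mat).\<close>

definition nonsing_sym :: "rat mat \<Rightarrow> bool" where
  "nonsing_sym A \<longleftrightarrow> A \<in> carrier_mat (dim_row A) (dim_row A) \<and>
     transpose_mat A = A \<and> det A \<noteq> 0"

definition orth_sum :: "rat mat \<Rightarrow> rat mat \<Rightarrow> rat mat" where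
  "orth_sum A B = four_block_mat A (0\<^sub>m (dim_row A) (dim_col B)) (0\<^sub>m (dim_row B) (dim_col A)) B"

text \<open>Orthogonal sum of k hyperbolic planes [[0,1],[1,0]].\<close>
definition hyp :: "nat \<Rightarrow> rat mat" where
  "hyp k = mat (2*k) (2*k) (\<lambda>(i,j). if i div 2 = j div 2 \<and> i \<noteq> j then 1 else 0)"

definition isometric :: "rat mat \<Rightarrow> rat mat \<Rightarrow> bool" where
  "isometric A B \<longleftrightarrow> (\<exists>n P. A \<in> carrier_mat n n \<and> B \<in> carrier_mat n n \<and>
      P \<in> carrier_mat n n \<and> det P \<noteq> 0 \<and> transpose_mat P * A * P = B)"

text \<open>Witt equivalence: A + kH isometric to B + lH.  Witt classes are the
  equivalence classes of nonsingular symmetric forms under this relation.\<close>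
definition witt_equiv :: "rat mat \<Rightarrow> rat mat \<Rightarrow> bool" where
  "witt_equiv A B \<longleftrightarrow> (\<exists>k l. isometric (orth_sum A (hyp k)) (orth_sum B (hyp l)))"

definition witt_rank :: "rat mat \<Rightarrow> nat" where
  "witt_rank A = (LEAST n. \<exists>B. B \<in> carrier_mat n n \<and> nonsing_sym B \<and> witt_equiv B A)"

definition signature :: "rat mat \<Rightarrow> int" where
  "signature A = (let p = char_poly (map_mat real_of_rat A) in
     int (\<Sum>x\<in>{x. x > 0 \<and> poly p x = 0}. order x p) -
     int (\<Sum>x\<in>{x. x < 0 \<and> poly p x = 0}. order x p))"

end

theory Submission
  imports Defs
begin


definition dg :: "'a::zero list \<Rightarrow> 'a mat" where
  "dg xs = mat (length xs) (length xs) (\<lambda>(i,j). if i = j then xs ! i else 0)"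

lemma dg_carrier[simp]: "dg xs \<in> carrier_mat (length xs) (length xs)"
  by (simp add: dg_def)
lemma dg_dims[simp]: "dim_row (dg xs) = length xs" "dim_col (dg xs) = length xs"
  by (simp_all add: dg_def)
lemma dg_index[simp]: "i < length xs \<Longrightarrow> j < length xs \<Longrightarrow> dg xs $$ (i,j) = (if i = j then xs!i else 0)"
  by (simp add: dg_def)

lemma dg_transpose[simp]: "transpose_mat (dg xs) = dg xs"
  by (rule eq_matI, auto)

lemma det_dg: "det (dg (xs :: 'a :: comm_ring_1 list)) = prod_list xs"
proof -
  have "det (dg xs) = prod_list (diag_mat (dg xs))"
    by (rule det_upper_triangular[of _ "length xs"], auto simp: upper_triangular_def)
  also have "diag_mat (dg xs) = xs" by (rule nth_equalityI, auto simp: diag_mat_def)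
  finally show ?thesis .
qed

definition bd :: "'a::zero mat \<Rightarrow> 'a mat \<Rightarrow> 'a mat" where
  "bd A B = four_block_mat A (0\<^sub>m (dim_row A) (dim_col B)) (0\<^sub>m (dim_row B) (dim_col A)) B"

lemma orth_sum_bd: "orth_sum = bd"
  by (auto simp: fun_eq_iff orth_sum_def bd_def)

lemma bd_carrier[simp]: "A \<in> carrier_mat n n \<Longrightarrow> B \<in> carrier_mat m m \<Longrightarrow> bd A B \<in> carrier_mat (n+m) (n+m)"
  by (auto simp: bd_def)

lemma bd_dg: "bd (dg xs) (dg ys) = dg (xs @ ys)"
  by (rule eq_matI, auto simp: bd_def index_mat_four_block nth_append)

lemma bd_empty: "A \<in> carrier_mat n n \<Longrightarrow> B \<in> carrier_mat 0 0 \<Longrightarrow> bd A B = A"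
  by (rule eq_matI, auto simp: bd_def index_mat_four_block)

lemma bd_mult: assumes "A \<in> carrier_mat n n" "B \<in> carrier_mat m m" "C \<in> carrier_mat n n" "D \<in> carrier_mat m m"
  shows "bd A B * bd C D = bd (A * C) (B * (D :: 'a :: semiring_1 mat))"
  using assms unfolding bd_def
  by (subst mult_four_block_mat[of _ n n _ m _ m _ _ n _ m], auto)

lemma bd_transpose: assumes "A \<in> carrier_mat n n" "B \<in> carrier_mat m m"
  shows "transpose_mat (bd A B) = bd (transpose_mat A) (transpose_mat (B :: 'a :: semiring_1 mat))"
  using assms unfolding bd_def
  by (subst transpose_four_block_mat[of _ n n _ m _ m], auto)

lemma det_bd: assumes "A \<in> carrier_mat n n" "B \<in> carrier_mat m m"
  shows "det (bd A B) = det A * det (B :: 'a :: idom mat)"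
  using assms unfolding bd_def
  by (subst det_four_block_mat_lower_left_zero[of _ n _ m], auto)

definition gcong :: "'a::field mat \<Rightarrow> 'a mat \<Rightarrow> bool" where
  "gcong A B \<longleftrightarrow> (\<exists>n P. A \<in> carrier_mat n n \<and> B \<in> carrier_mat n n \<and>
      P \<in> carrier_mat n n \<and> det P \<noteq> 0 \<and> transpose_mat P * A * P = B)"

lemma isometric_gcong: "isometric = gcong"
  by (auto simp: fun_eq_iff isometric_def gcong_def)

lemma gcong_refl: "A \<in> carrier_mat n n \<Longrightarrow> gcong A A"
  unfolding gcong_def by (rule exI[of _ n], rule exI[of _ "1\<^sub>m n"], auto)

lemma gcong_trans: assumes "gcong A B" "gcong B C" shows "gcong A C"
proof -
  from assms(1) obtain n P where *: "A \<in> carrier_mat n n" "B \<in> carrier_mat n n"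
      "P \<in> carrier_mat n n" "det P \<noteq> 0" "transpose_mat P * A * P = B" unfolding gcong_def by auto
  from assms(2) obtain m Q where **: "B \<in> carrier_mat m m" "C \<in> carrier_mat m m"
      "Q \<in> carrier_mat m m" "det Q \<noteq> 0" "transpose_mat Q * B * Q = C" unfolding gcong_def by auto
  from * ** have m: "m = n" by auto
  have "transpose_mat (P * Q) * A * (P * Q) = transpose_mat Q * (transpose_mat P * A * P) * Q"
    using *(1-4) **(1-4) m by (simp add: transpose_mult[of _ n n _ n] assoc_mult_mat[of _ n n _ n _ n])
  also have "\<dots> = C" unfolding *(5) **(5) ..
  finally have e: "transpose_mat (P * Q) * A * (P * Q) = C" .
  have d: "det (P * Q) \<noteq> 0" using *(3,4) **(3,4) m by (simp add: det_mult)
  have c: "P * Q \<in> carrier_mat n n" using *(3) **(3) m by simp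
  show ?thesis unfolding gcong_def
    by (rule exI[of _ n], rule exI[of _ "P * Q"], intro conjI, fact *(1), use **(2) m in simp, fact c, fact d, fact e)
qed

lemma inverse_ex: assumes "P \<in> carrier_mat n n" "det (P :: 'a :: field mat) \<noteq> 0"
  shows "\<exists>R. R \<in> carrier_mat n n \<and> P * R = 1\<^sub>m n \<and> R * P = 1\<^sub>m n"
proof -
  have "P \<in> Units (ring_mat TYPE('a) n undefined)" by (rule det_non_zero_imp_unit[OF assms])
  thus ?thesis unfolding Units_def ring_mat_def by auto
qed

lemma gcong_sym: assumes "gcong A B" shows "gcong B A"
proof -
  from assms obtain n P where *: "A \<in> carrier_mat n n" "B \<in> carrier_mat n n"
      "P \<in> carrier_mat n n" "det P \<noteq> 0" "transpose_mat P * A * P = B" unfolding gcong_def by auto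
  from inverse_ex[OF *(3,4)] obtain R where R: "R \<in> carrier_mat n n" "P * R = 1\<^sub>m n" "R * P = 1\<^sub>m n" by auto
  have RT: "transpose_mat R * transpose_mat P = 1\<^sub>m n"
    using R by (metis transpose_mult transpose_one *(3))
  have "transpose_mat R * B * R = (transpose_mat R * transpose_mat P) * A * (P * R)"
    unfolding *(5)[symmetric] using *(1-4) R by (simp add: assoc_mult_mat[of _ n n _ n _ n])
  also have "\<dots> = A" using R RT * by simp
  finally have e: "transpose_mat R * B * R = A" .
  have "det (P * R) = det P * det R" by (rule det_mult, use R * in auto)
  hence "det P * det R = 1" using R by simp
  hence "det R \<noteq> 0" by auto
  thus ?thesis unfolding gcong_def using *(1,2) R(1) e by blast
qed

lemma gcongI: assumes "A \<in> carrier_mat n n" "P \<in> carrier_mat n n" "transpose_mat P * A * P = B"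
  "det B \<noteq> 0" shows "gcong A B"
proof -
  have B: "B \<in> carrier_mat n n" using assms by auto
  have "det B = det (transpose_mat P * A) * det P" unfolding assms(3)[symmetric]
    by (rule det_mult, use assms(1,2) in auto)
  also have "det (transpose_mat P * A) = det (transpose_mat P) * det A"
    by (rule det_mult, use assms(1,2) in auto)
  also have "det (transpose_mat P) = det P" by (rule det_transpose, fact)
  finally have "det B = det P * det A * det P" .
  hence "det P \<noteq> 0" using assms(4) by auto
  thus ?thesis unfolding gcong_def using assms(1-3) B by blast
qed

lemma orth_det: assumes "P \<in> carrier_mat n n" "transpose_mat P * P = 1\<^sub>m n"
  shows "det (P :: 'a :: field mat) \<noteq> 0"
proof -
  have "det (transpose_mat P * P) = det (transpose_mat P) * det P"
    by (rule det_mult, use assms in auto)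
  hence "det P * det P = 1" using assms by (simp add: det_transpose)
  thus ?thesis by auto
qed

lemma bd_conj: assumes "A \<in> carrier_mat n n" "B \<in> carrier_mat m m" "P \<in> carrier_mat n n" "Q \<in> carrier_mat m m"
  shows "transpose_mat (bd P Q) * bd A B * bd P Q = bd (transpose_mat P * A * P) (transpose_mat Q * B * (Q :: 'a :: semiring_1 mat))"
proof -
  have "transpose_mat (bd P Q) * bd A B * bd P Q = bd (transpose_mat P * A) (transpose_mat Q * B) * bd P Q"
    using assms by (simp add: bd_transpose bd_mult)
  also have "\<dots> = bd (transpose_mat P * A * P) (transpose_mat Q * B * Q)"
    using assms by (subst bd_mult[of _ n _ m], auto)
  finally show ?thesis .
qed

lemma gcong_bd: assumes "gcong A A'" "gcong B B'" shows "gcong (bd A B) (bd A' B')"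
proof -
  from assms(1) obtain n P where *: "A \<in> carrier_mat n n" "A' \<in> carrier_mat n n"
      "P \<in> carrier_mat n n" "det P \<noteq> 0" "transpose_mat P * A * P = A'" unfolding gcong_def by auto
  from assms(2) obtain m Q where **: "B \<in> carrier_mat m m" "B' \<in> carrier_mat m m"
      "Q \<in> carrier_mat m m" "det Q \<noteq> 0" "transpose_mat Q * B * Q = B'" unfolding gcong_def by auto
  have "transpose_mat (bd P Q) * bd A B * bd P Q = bd A' B'"
    using bd_conj[OF *(1) **(1) *(3) **(3)] *(5) **(5) by simp
  moreover have "det (bd P Q) \<noteq> 0" using det_bd[OF *(3) **(3)] *(4) **(4) by simp
  moreover have "bd A B \<in> carrier_mat (n+m) (n+m)" "bd A' B' \<in> carrier_mat (n+m) (n+m)"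
     "bd P Q \<in> carrier_mat (n+m) (n+m)" using *(1-3) **(1-3) by auto
  ultimately show ?thesis unfolding gcong_def by blast
qed

lemma quad_index: assumes "P \<in> carrier_mat n n" "M \<in> carrier_mat n n" "i < n" "j < n"
  shows "(transpose_mat P * M * P) $$ (i,j) = col P i \<bullet> (M *\<^sub>v col P j)"
proof -
  have e1: "transpose_mat P * M * P = transpose_mat P * (M * P)"
    by (rule assoc_mult_mat[of _ n n _ n _ n], use assms in auto)
  have MP: "M * P \<in> carrier_mat n n" using assms by simp
  have "(transpose_mat P * (M * P)) $$ (i,j) = row (transpose_mat P) i \<bullet> col (M * P) j"
    by (rule index_mult_mat(1), use assms MP in auto)
  also have "row (transpose_mat P) i = col P i" by (rule row_transpose, use assms in auto)
  also have "col (M * P) j = M *\<^sub>v col P j" by (rule col_mult2[OF assms(2) assms(1) assms(4)])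
  finally show ?thesis unfolding e1 .
qed

lemma mult_unit_vec: assumes "(M :: 'a :: comm_ring_1 mat) \<in> carrier_mat n m" "j < m" shows "M *\<^sub>v unit_vec m j = col M j"
proof (rule eq_vecI)
  fix i assume i: "i < dim_vec (col M j)"
  have "row M i \<bullet> unit_vec m j = row M i $ j" by (rule scalar_prod_right_unit, use assms in auto)
  thus "(M *\<^sub>v unit_vec m j) $ i = col M j $ i" using i assms by auto
qed (insert assms, auto)



lemma perm_conj: assumes p: "p permutes {..<length xs}"
  defines "P \<equiv> mat (length xs) (length xs) (\<lambda>(i,j). if i = p j then 1 else (0 :: 'a :: comm_ring_1))"
  shows "transpose_mat P * dg xs * P = dg (permute_list p xs)"
proof -
  let ?n = "length xs"
  have Pc: "P \<in> carrier_mat ?n ?n" unfolding P_def by simp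
  have pl: "j < ?n \<Longrightarrow> p j < ?n" for j using permutes_in_image[OF p] by auto
  have colP: "j < ?n \<Longrightarrow> col P j = unit_vec ?n (p j)" for j
    by (rule eq_vecI, auto simp: P_def unit_vec_def pl)
  show ?thesis
  proof (rule eq_matI)
    fix i j assume i: "i < dim_row (dg (permute_list p xs))" and j: "j < dim_col (dg (permute_list p xs))"
    hence i: "i < ?n" and j: "j < ?n" by auto
    have mu: "dg xs *\<^sub>v unit_vec ?n (p j) = col (dg xs) (p j)"
      by (rule mult_unit_vec[of _ ?n], simp, rule pl[OF j])
    have cc: "col (dg xs) (p j) \<in> carrier_vec ?n" by (rule carrier_vecI, simp only: dim_col dg_dims)
    have "(transpose_mat P * dg xs * P) $$ (i,j) = col P i \<bullet> (dg xs *\<^sub>v col P j)"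
      by (rule quad_index[OF Pc], auto simp: i j)
    also have "\<dots> = unit_vec ?n (p i) \<bullet> col (dg xs) (p j)"
      unfolding colP[OF i] colP[OF j] mu ..
    also have "\<dots> = (dg xs) $$ (p i, p j)"
      by (subst scalar_prod_left_unit[OF cc], auto simp: pl i j)
    also have "\<dots> = (if i = j then xs ! p i else 0)"
      using pl[OF i] pl[OF j] by (simp add: inj_eq[OF permutes_inj[OF p]])
    also have "\<dots> = dg (permute_list p xs) $$ (i,j)"
      using i j by (simp add: permute_list_nth[OF p])
    finally show "(transpose_mat P * dg xs * P) $$ (i,j) = dg (permute_list p xs) $$ (i,j)" .
  qed (simp_all add: P_def)
qed

lemma gcong_perm: assumes "mset xs = mset (ys :: 'a :: field list)" shows "gcong (dg xs) (dg ys)"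
proof -
  from assms have "mset ys = mset xs" by simp
  from mset_eq_permutation[OF this] obtain p where p: "p permutes {..<length xs}" and
    ys: "permute_list p xs = ys" by metis
  define P where "P \<equiv> mat (length xs) (length xs) (\<lambda>(i,j). if i = p j then 1 else (0 :: 'a))"
  have Pc: "P \<in> carrier_mat (length xs) (length xs)" unfolding P_def by simp
  have e: "transpose_mat P * dg xs * P = dg ys" using perm_conj[OF p] unfolding P_def ys by simp
  have pl: "i < length xs \<Longrightarrow> p i < length xs" for i using permutes_in_image[OF p] by auto
  have p1: "p permutes {..<length (replicate (length xs) (1::'a))}" using p by simp
  have "transpose_mat P * dg (replicate (length xs) 1) * P = dg (permute_list p (replicate (length xs) (1::'a)))"
    using perm_conj[OF p1] unfolding P_def by simp
  also have "permute_list p (replicate (length xs) (1::'a)) = replicate (length xs) 1"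
    by (rule nth_equalityI, auto simp: permute_list_nth[OF p1] pl)
  also have "dg (replicate (length xs) (1::'a)) = 1\<^sub>m (length xs)" by (rule eq_matI, auto)
  finally have "transpose_mat P * 1\<^sub>m (length xs) * P = 1\<^sub>m (length xs)"
    using \<open>dg (replicate (length xs) (1::'a)) = 1\<^sub>m (length xs)\<close> by simp
  hence "transpose_mat P * P = 1\<^sub>m (length xs)" using Pc by simp
  from orth_det[OF Pc this] have "det P \<noteq> 0" .
  thus ?thesis unfolding gcong_def using Pc e assms
    by (intro exI[of _ "length xs"] exI[of _ P], auto dest: mset_eq_length)
qed

lemma dg_mult_vec_index: assumes "i < length (xs :: 'a :: comm_ring_1 list)" "dim_vec v = length xs"
  shows "(dg xs *\<^sub>v v) $ i = xs ! i * v $ i"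
proof -
  have "(dg xs *\<^sub>v v) $ i = (\<Sum>k<length xs. (if i = k then xs ! i else 0) * v $ k)"
    using assms by (simp add: scalar_prod_def atLeast0LessThan)
  also have "\<dots> = (\<Sum>k<length xs. if k = i then xs ! i * v $ i else 0)"
    by (rule sum.cong, auto)
  also have "\<dots> = xs ! i * v $ i" using assms by simp
  finally show ?thesis .
qed

lemma dg_quad: assumes "dim_vec v = length (xs :: 'a :: comm_ring_1 list)"
  shows "v \<bullet> (dg xs *\<^sub>v v) = (\<Sum>i<length xs. xs ! i * (v $ i * v $ i))"
proof -
  have "v \<bullet> (dg xs *\<^sub>v v) = (\<Sum>i<length xs. v $ i * (dg xs *\<^sub>v v) $ i)"
    by (simp only: scalar_prod_def dim_mult_mat_vec dg_dims atLeast0LessThan)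
  also have "\<dots> = (\<Sum>i<length xs. xs ! i * (v $ i * v $ i))"
    by (rule sum.cong[OF refl], subst dg_mult_vec_index, use assms in auto)
  finally show ?thesis .
qed

lemma det_zero_row: assumes "M \<in> carrier_mat n n" "k < n" "row M k = 0\<^sub>v n"
  shows "det (M :: 'a :: field mat) = 0"
proof -
  have "transpose_mat M *\<^sub>v unit_vec n k = col (transpose_mat M) k"
    by (rule mult_unit_vec, use assms in auto)
  also have "\<dots> = 0\<^sub>v n" using assms by (simp add: col_transpose)
  finally have e: "transpose_mat M *\<^sub>v unit_vec n k = 0\<^sub>v n" .
  have ne: "(unit_vec n k :: 'a vec) \<noteq> 0\<^sub>v n"
  proof
    assume h: "(unit_vec n k :: 'a vec) = 0\<^sub>v n"
    have "(unit_vec n k :: 'a vec) $ k = 1" using assms by simp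
    moreover have "0\<^sub>v n $ k = (0 :: 'a)" using assms by simp
    moreover have "(unit_vec n k :: 'a vec) $ k = 0\<^sub>v n $ k" by (simp only: h)
    ultimately show False by simp
  qed
  have "\<exists>v. v \<in> carrier_vec n \<and> v \<noteq> 0\<^sub>v n \<and> transpose_mat M *\<^sub>v v = 0\<^sub>v n"
    using e ne by (intro exI[of _ "unit_vec n k"]) simp
  hence "det (transpose_mat M) = 0" using det_0_iff_vec_prod_zero_field[of "transpose_mat M" n] assms by simp
  thus ?thesis using assms by (simp add: det_transpose)
qed

lemma sylv_le: assumes P: "P \<in> carrier_mat n n" and lx: "length xs = n" and ly: "length ys = n"
  and e: "transpose_mat P * dg xs * P = dg (ys :: 'a :: linordered_field list)"
  shows "card {i. i < n \<and> 0 < ys ! i} \<le> card {i. i < n \<and> 0 < xs ! i}"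
proof (rule ccontr)
  define Ix where "Ix = {i. i < n \<and> 0 < xs ! i}"
  define Iy where "Iy = {i. i < n \<and> 0 < ys ! i}"
  assume "\<not> card {i. i < n \<and> 0 < ys ! i} \<le> card {i. i < n \<and> 0 < xs ! i}"
  hence lt: "card Ix < card Iy" unfolding Ix_def Iy_def by simp
  have fIx: "finite Ix" "Ix \<subseteq> {..<n}" unfolding Ix_def by auto
  have fIy: "finite Iy" "Iy \<subseteq> {..<n}" unfolding Iy_def by auto
  define C where "C = {..<n} - Iy"
  have cC: "card C = n - card Iy" unfolding C_def using fIy by (simp add: card_Diff_subset)
  have cIy: "card Iy \<le> n" using fIy by (metis card_lessThan card_mono finite_lessThan)
  define L where "L = map (row P) (sorted_list_of_set Ix) @ map (unit_vec n) (sorted_list_of_set C)"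
  have lL: "length L < n" unfolding L_def using lt cC cIy by simp
  have Lc: "set L \<subseteq> carrier_vec n" unfolding L_def using P by auto
  define M where "M = mat_of_rows n (L @ replicate (n - length L) (0\<^sub>v n))"
  have lL2: "length (L @ replicate (n - length L) (0\<^sub>v n)) = n" using lL by simp
  have Mc: "M \<in> carrier_mat n n" unfolding M_def using mat_of_rows_carrier(1)[of n "L @ replicate (n - length L) (0\<^sub>v n)"] unfolding lL2 .
  have nl: "\<not> (n - 1 < length L)" using lL by linarith
  have "row M (n - 1) = (L @ replicate (n - length L) (0\<^sub>v n)) ! (n - 1)" unfolding M_def using lL Lc
    by (subst mat_of_rows_row, auto simp: nth_append)
  also have "\<dots> = 0\<^sub>v n" using lL nl by (simp add: nth_append)
  finally have "row M (n - 1) = 0\<^sub>v n" .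
  hence "det M = 0" by (intro det_zero_row[OF Mc, of "n - 1"], use lL in auto)
  then obtain z where z: "z \<in> carrier_vec n" "z \<noteq> 0\<^sub>v n" "M *\<^sub>v z = 0\<^sub>v n"
    using det_0_iff_vec_prod_zero_field[OF Mc] by auto
  have orth: "v \<bullet> z = 0" if v: "v \<in> set L" for v
  proof -
    from v obtain l where l: "l < length L" "L ! l = v" by (auto simp: in_set_conv_nth)
    have "(M *\<^sub>v z) $ l = row M l \<bullet> z" using Mc l lL by simp
    also have "row M l = v" unfolding M_def using l lL Lc by (subst mat_of_rows_row, auto simp: nth_append)
    finally show ?thesis using z(3) l lL by simp
  qed
  have zC: "z $ j = 0" if j: "j < n" "j \<notin> Iy" for j
  proof -
    have "unit_vec n j \<in> set L" unfolding L_def C_def using j fIy by auto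
    from orth[OF this] show ?thesis using z j by (simp add: scalar_prod_left_unit)
  qed
  define w where "w = P *\<^sub>v z"
  have wc: "w \<in> carrier_vec n" unfolding w_def using P z by auto
  have wIx: "w $ i = 0" if i: "i \<in> Ix" for i
  proof -
    have "row P i \<in> set L" unfolding L_def using i fIx by auto
    from orth[OF this] show ?thesis unfolding w_def using i P fIx by auto
  qed
  from z(1,2) obtain k where k: "k < n" "z $ k \<noteq> 0"
    by (metis (no_types, lifting) carrier_vecD eq_vecI index_zero_vec(1,2))
  with zC have kIy: "k \<in> Iy" by auto
  have pos: "0 < z \<bullet> (dg ys *\<^sub>v z)"
  proof -
    have "z \<bullet> (dg ys *\<^sub>v z) = (\<Sum>i<n. ys ! i * (z $ i * z $ i))" using dg_quad[of z ys] z ly by simp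
    also have "\<dots> > 0"
    proof (rule sum_pos2[of _ k])
      show "finite {..<n}" by simp
      show "k \<in> {..<n}" using k by simp
      have "0 < z $ k * z $ k" using k(2) by (auto simp: zero_less_mult_iff linorder_neq_iff)
      thus "0 < ys ! k * (z $ k * z $ k)" using kIy k unfolding Iy_def by (simp add: mult_pos_pos)
      show "\<And>i. i \<in> {..<n} \<Longrightarrow> 0 \<le> ys ! i * (z $ i * z $ i)"
      proof -
        fix i assume "i \<in> {..<n}"
        thus "0 \<le> ys ! i * (z $ i * z $ i)" using zC[of i] unfolding Iy_def by (cases "0 < ys ! i", auto)
      qed
    qed
    finally show ?thesis .
  qed
  have D: "dg xs \<in> carrier_mat n n" using lx by auto
  have Dw: "dg xs *\<^sub>v w \<in> carrier_vec n" by (rule mult_mat_vec_carrier[OF D wc])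
  have PT: "transpose_mat P \<in> carrier_mat n n" using P by simp
  have PDw: "transpose_mat P *\<^sub>v (dg xs *\<^sub>v w) \<in> carrier_vec n" by (rule mult_mat_vec_carrier[OF PT Dw])
  have "(transpose_mat P * dg xs * P) *\<^sub>v z = (transpose_mat P * dg xs) *\<^sub>v (P *\<^sub>v z)"
    by (rule assoc_mult_mat_vec[of _ n n _ n], use P D z in auto)
  also have "\<dots> = transpose_mat P *\<^sub>v (dg xs *\<^sub>v (P *\<^sub>v z))"
    by (rule assoc_mult_mat_vec[of _ n n _ n], use P D z in auto)
  finally have "z \<bullet> (dg ys *\<^sub>v z) = z \<bullet> (transpose_mat P *\<^sub>v (dg xs *\<^sub>v w))"
    unfolding e w_def by simp
  also have "\<dots> = (transpose_mat P *\<^sub>v (dg xs *\<^sub>v w)) \<bullet> z"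
    by (rule comm_scalar_prod[OF z(1) PDw])
  also have "\<dots> = (dg xs *\<^sub>v w) \<bullet> w" unfolding w_def
    by (rule transpose_vec_mult_scalar[OF P z(1)], use Dw w_def in simp)
  also have "\<dots> = w \<bullet> (dg xs *\<^sub>v w)"
    by (rule comm_scalar_prod[OF Dw wc])
  also have "\<dots> = (\<Sum>i<n. xs ! i * (w $ i * w $ i))" using dg_quad[of w xs] wc lx by simp
  also have "\<dots> \<le> 0"
  proof (rule sum_nonpos)
    fix i assume "i \<in> {..<n}"
    thus "xs ! i * (w $ i * w $ i) \<le> 0" using wIx[of i] unfolding Ix_def
      by (cases "0 < xs ! i", auto intro: mult_nonpos_nonneg)
  qed
  finally show False using pos by simp
qed

definition npos :: "'a :: linordered_idom list \<Rightarrow> nat" where "npos xs = length (filter (\<lambda>x. 0 < x) xs)"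
definition nneg :: "'a :: linordered_idom list \<Rightarrow> nat" where "nneg xs = length (filter (\<lambda>x. x < 0) xs)"

lemma npos_card: "npos xs = card {i. i < length xs \<and> 0 < xs ! i}"
  unfolding npos_def by (rule length_filter_conv_card)

lemma gcong_dims: "gcong A B \<Longrightarrow> \<exists>n. A \<in> carrier_mat n n \<and> B \<in> carrier_mat n n"
  unfolding gcong_def by auto

lemma sylv_npos: assumes "gcong (dg xs) (dg (ys :: 'a :: linordered_field list))"
  shows "npos xs = npos ys"
proof -
  have le: "npos ys \<le> npos xs" if "gcong (dg xs) (dg ys)" for xs ys :: "'a list"
  proof -
    from that obtain n P where *: "dg xs \<in> carrier_mat n n" "dg ys \<in> carrier_mat n n"
      "P \<in> carrier_mat n n" "transpose_mat P * dg xs * P = dg ys" unfolding gcong_def by auto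
    have lx: "length xs = n" using carrier_matD(1)[OF *(1)] by simp
    have ly: "length ys = n" using carrier_matD(1)[OF *(2)] by simp
    show ?thesis unfolding npos_card lx ly using sylv_le[OF *(3) lx ly *(4)] .
  qed
  show ?thesis using le[OF assms] le[OF gcong_sym[OF assms]] by simp
qed

lemma gcong_neg: assumes "gcong A B" shows "gcong (- A) (- B)"
proof -
  from assms obtain n P where *: "A \<in> carrier_mat n n" "B \<in> carrier_mat n n"
      "P \<in> carrier_mat n n" "det P \<noteq> 0" "transpose_mat P * A * P = B" unfolding gcong_def by auto
  have "transpose_mat P * (- A) * P = - B" unfolding *(5)[symmetric] using *(1,3)
    by (simp add: uminus_mult_right_mat uminus_mult_left_mat)
  thus ?thesis unfolding gcong_def using *(1-4) by (intro exI[of _ n] exI[of _ P], auto)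
qed

lemma dg_uminus: "- dg xs = dg (map uminus (xs :: 'a :: ring_1 list))"
  by (rule eq_matI, auto)

lemma nneg_npos: "nneg xs = npos (map uminus xs)"
  unfolding nneg_def npos_def by (induct xs, auto)

lemma sylv_nneg: assumes "gcong (dg xs) (dg (ys :: 'a :: linordered_field list))"
  shows "nneg xs = nneg ys"
  unfolding nneg_npos using sylv_npos[OF gcong_neg[OF assms, unfolded dg_uminus]] .

lemma gcong_of_rat: assumes "gcong A B"
  shows "gcong (map_mat (of_rat :: rat \<Rightarrow> 'a :: field_char_0) A) (map_mat of_rat B)"
proof -
  from assms obtain n P where *: "A \<in> carrier_mat n n" "B \<in> carrier_mat n n"
      "P \<in> carrier_mat n n" "det P \<noteq> 0" "transpose_mat P * A * P = B" unfolding gcong_def by auto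
  have "transpose_mat (map_mat of_rat P) * map_mat of_rat A * map_mat of_rat P = (map_mat (of_rat :: rat \<Rightarrow> 'a) B)"
    unfolding *(5)[symmetric] using *(1,3) 
    by (simp add: of_rat_hom.mat_hom_mult[of _ n n _ n] map_mat_transpose)
  moreover have "det (map_mat (of_rat :: rat \<Rightarrow> 'a) P) \<noteq> 0" using *(4) by (simp add: of_rat_hom.hom_det)
  ultimately show ?thesis unfolding gcong_def using *(1-3) by (intro exI[of _ n] exI[of _ "map_mat of_rat P"], auto)
qed

lemma map_dg: "f 0 = 0 \<Longrightarrow> map_mat f (dg xs) = dg (map f xs)"
  by (rule eq_matI, auto)



lemma col_carr: "M \<in> carrier_mat n m \<Longrightarrow> col M j \<in> carrier_vec n"
  by (rule carrier_vecI, simp)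

lemma conj_mult: assumes "A \<in> carrier_mat n n" "T \<in> carrier_mat n n" "W \<in> carrier_mat n n"
  shows "transpose_mat (T * W) * A * (T * W) = transpose_mat W * (transpose_mat T * A * T) * (W :: 'a :: comm_ring_1 mat)"
  using assms by (simp add: transpose_mult[of _ n n _ n] assoc_mult_mat[of _ n n _ n _ n])

lemma conj_sym: assumes "A \<in> carrier_mat n n" "T \<in> carrier_mat n n" "transpose_mat A = A"
  shows "transpose_mat (transpose_mat T * A * T) = transpose_mat T * A * (T :: 'a :: comm_ring_1 mat)"
proof -
  have "transpose_mat (transpose_mat T * A * T) = transpose_mat T * transpose_mat (transpose_mat T * A)"
    by (rule transpose_mult[of _ n n _ n], use assms in auto)
  also have "transpose_mat (transpose_mat T * A) = transpose_mat A * T"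
    using transpose_mult[of "transpose_mat T" n n A n] assms by simp
  finally show ?thesis using assms by (simp add: assoc_mult_mat[of _ n n _ n _ n])
qed

definition A3 :: "'a mat \<Rightarrow> 'a mat" where
  "A3 M = mat (dim_row M - 1) (dim_row M - 1) (\<lambda>(i,j). M $$ (Suc i, Suc j))"

lemma split_first: assumes M: "M \<in> carrier_mat (Suc n) (Suc n)" and sym: "transpose_mat M = M"
  and c: "\<And>i. i < Suc n \<Longrightarrow> M $$ (i,0) = (if i = 0 then c else (0 :: 'a :: comm_ring_1))"
  shows "M = bd (dg [c]) (A3 M)" "transpose_mat (A3 M) = A3 M" "A3 M \<in> carrier_mat n n"
proof -
  have sy: "i < Suc n \<Longrightarrow> j < Suc n \<Longrightarrow> M $$ (j,i) = M $$ (i,j)" for i j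
    using arg_cong[OF sym, of "\<lambda>X. X $$ (i,j)"] M by simp
  show "A3 M \<in> carrier_mat n n" unfolding A3_def using M by simp
  show "transpose_mat (A3 M) = A3 M" 
    by (rule eq_matI, unfold A3_def, use M sy in auto)
  show "M = bd (dg [c]) (A3 M)"
  proof (rule eq_matI)
    fix i j assume i: "i < dim_row (bd (dg [c]) (A3 M))" and j: "j < dim_col (bd (dg [c]) (A3 M))"
    have i': "i < Suc n" and j': "j < Suc n" using i j M unfolding bd_def A3_def by auto
    show "M $$ (i,j) = bd (dg [c]) (A3 M) $$ (i,j)"
    proof (cases "i = 0")
      case True
      thus ?thesis using c[OF j'] sy[OF i' j'] j' M unfolding bd_def A3_def
        by (cases "j = 0", auto simp: index_mat_four_block)
    next
      case False
      then obtain i0 where i0: "i = Suc i0" by (cases i, auto)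
      show ?thesis
      proof (cases "j = 0")
        case True thus ?thesis using c[OF i'] i' M False unfolding bd_def A3_def
          by (auto simp: index_mat_four_block)
      next
        case False
        then obtain j0 where j0: "j = Suc j0" by (cases j, auto)
        show ?thesis using i' j' M unfolding bd_def A3_def i0 j0 by (auto simp: index_mat_four_block)
      qed
    qed
  qed (use M in \<open>auto simp: bd_def A3_def\<close>)
qed

lemma clear_step: assumes M: "M \<in> carrier_mat N N" and sym: "transpose_mat M = M"
  and m0: "M $$ (0,0) \<noteq> (0 :: 'a :: field)" and N: "0 < N"
  shows "\<exists>W. W \<in> carrier_mat N N \<and> det W \<noteq> 0 \<and>
    (\<forall>i<N. (transpose_mat W * M * W) $$ (i,0) = (if i = 0 then M $$ (0,0) else 0))"
proof -
  define r where "r k = - M $$ (0,k) / M $$ (0,0)" for k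
  define W where "W = mat N N (\<lambda>(i,k). if i = k then 1 else if i = 0 then r k else (0 :: 'a))"
  have Wc: "W \<in> carrier_mat N N" unfolding W_def by simp
  have sy: "i < N \<Longrightarrow> j < N \<Longrightarrow> M $$ (j,i) = M $$ (i,j)" for i j
    using arg_cong[OF sym, of "\<lambda>X. X $$ (i,j)"] M by simp
  have col0: "col W 0 = unit_vec N 0" by (rule eq_vecI, auto simp: W_def N)
  have coli: "0 < i \<Longrightarrow> i < N \<Longrightarrow> col W i = unit_vec N i + r i \<cdot>\<^sub>v unit_vec N 0" for i
    by (rule eq_vecI, auto simp: W_def)
  have cM: "col M 0 \<in> carrier_vec N" using M by (rule col_carr)
  have "det W = prod_list (diag_mat W)"
    by (rule det_upper_triangular[OF _ Wc], auto simp: upper_triangular_def W_def)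
  also have "diag_mat W = replicate N 1" by (rule nth_equalityI, auto simp: diag_mat_def W_def)
  finally have dW: "det W = 1" by simp
  have "(transpose_mat W * M * W) $$ (i,0) = (if i = 0 then M $$ (0,0) else 0)" if i: "i < N" for i
  proof -
    have "(transpose_mat W * M * W) $$ (i,0) = col W i \<bullet> (M *\<^sub>v col W 0)"
      by (rule quad_index[OF Wc M i N])
    also have "M *\<^sub>v col W 0 = col M 0" unfolding col0 by (rule mult_unit_vec[OF M N])
    finally have e: "(transpose_mat W * M * W) $$ (i,0) = col W i \<bullet> col M 0" .
    show ?thesis
    proof (cases "i = 0")
      case True
      have "unit_vec N 0 \<bullet> col M 0 = col M 0 $ 0" by (rule scalar_prod_left_unit[OF cM N])
      thus ?thesis using e True col0 N M by simp
    next
      case False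
      have ci: "col W i = unit_vec N i + r i \<cdot>\<^sub>v unit_vec N 0" using coli[of i] False i by simp
      have "col W i \<bullet> col M 0 = unit_vec N i \<bullet> col M 0 + (r i \<cdot>\<^sub>v unit_vec N 0) \<bullet> col M 0"
        unfolding ci by (rule add_scalar_prod_distrib[OF _ _ cM], auto)
      also have "\<dots> = M $$ (i,0) + r i * M $$ (0,0)"
        using i N M by (simp add: scalar_prod_left_unit[OF cM])
      also have "\<dots> = 0" unfolding r_def using m0 sy[OF i N] by simp
      finally show ?thesis using e False by simp
    qed
  qed
  thus ?thesis using Wc dW by (intro exI[of _ W], auto)
qed

lemma nonzero_step: assumes A: "A \<in> carrier_mat N N" and sym: "transpose_mat A = A"
  and a00: "A $$ (0,0) = 0" and j: "j < N" "j \<noteq> 0" and aj: "A $$ (j,0) \<noteq> (0 :: 'a :: field_char_0)"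
  shows "\<exists>T. T \<in> carrier_mat N N \<and> det T \<noteq> 0 \<and> (transpose_mat T * A * T) $$ (0,0) \<noteq> 0"
proof -
  have N: "0 < N" using j by auto
  have sy: "i < N \<Longrightarrow> k < N \<Longrightarrow> A $$ (k,i) = A $$ (i,k)" for i k
    using arg_cong[OF sym, of "\<lambda>X. X $$ (i,k)"] A by simp
  define T where "T t = mat N N (\<lambda>(i,k). if i = k then 1 else if i = j \<and> k = 0 then t else (0 :: 'a))" for t
  have Tc: "T t \<in> carrier_mat N N" for t unfolding T_def by simp
  have dT: "det (T t) = 1" for t
  proof -
    have "det (T t) = prod_list (diag_mat (T t))"
      by (rule det_lower_triangular[OF _ Tc], use j in \<open>auto simp: T_def\<close>)
    also have "diag_mat (T t) = replicate N 1" by (rule nth_equalityI, auto simp: diag_mat_def T_def)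
    finally show ?thesis by simp
  qed
  have col0: "col (T t) 0 = unit_vec N 0 + t \<cdot>\<^sub>v unit_vec N j" for t
    by (rule eq_vecI, use j in \<open>auto simp: T_def\<close>)
  have u0: "unit_vec N 0 \<in> carrier_vec N" and uj: "unit_vec N j \<in> carrier_vec N" by auto
  have c0: "col A 0 \<in> carrier_vec N" and cj: "col A j \<in> carrier_vec N" using A by (auto intro: col_carr)
  have val: "(transpose_mat (T t) * A * T t) $$ (0,0) = 2 * t * A $$ (j,0) + t * t * A $$ (j,j)" for t
  proof -
    have "(transpose_mat (T t) * A * T t) $$ (0,0) = col (T t) 0 \<bullet> (A *\<^sub>v col (T t) 0)"
      by (rule quad_index[OF Tc A N N])
    also have "A *\<^sub>v col (T t) 0 = col A 0 + t \<cdot>\<^sub>v col A j"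
      unfolding col0 using A j N by (simp add: mult_add_distrib_mat_vec[OF A u0] mult_mat_vec[OF A uj] mult_unit_vec)
    also have "col (T t) 0 \<bullet> (col A 0 + t \<cdot>\<^sub>v col A j) =
       (unit_vec N 0 \<bullet> col A 0 + t * (unit_vec N 0 \<bullet> col A j)) + t * (unit_vec N j \<bullet> col A 0 + t * (unit_vec N j \<bullet> col A j))"
      unfolding col0 using u0 uj c0 cj
      by (simp add: add_scalar_prod_distrib[of _ N] scalar_prod_add_distrib[of _ N] 
          smult_scalar_prod_distrib[of _ N] scalar_prod_smult_distrib[of _ N] algebra_simps)
    also have "\<dots> = A $$ (0,0) + t * A $$ (0,j) + t * (A $$ (j,0) + t * A $$ (j,j))"
      using A j N by (simp add: scalar_prod_left_unit[OF c0] scalar_prod_left_unit[OF cj])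
    finally show ?thesis using a00 sy[OF N j(1)] by (simp add: algebra_simps)
  qed
  show ?thesis
  proof (cases "2 * 1 * A $$ (j,0) + 1 * 1 * A $$ (j,j) = 0")
    case False thus ?thesis using val[of 1] Tc dT by (intro exI[of _ "T 1"], auto)
  next
    case True
    hence "2 * (-1) * A $$ (j,0) + (-1) * (-1) * A $$ (j,j) \<noteq> 0" using aj by auto
    thus ?thesis using val[of "-1"] Tc dT by (intro exI[of _ "T (-1)"], auto)
  qed
qed

lemma rat_split: assumes A: "A \<in> carrier_mat (Suc n) (Suc n)" and sym: "transpose_mat A = A"
  shows "\<exists>W c. W \<in> carrier_mat (Suc n) (Suc n) \<and> det W \<noteq> 0 \<and>
    (\<forall>i<Suc n. (transpose_mat W * A * W) $$ (i,0) = (if i = 0 then c else (0 :: 'a :: field_char_0)))"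
proof (cases "\<exists>j. j < Suc n \<and> j \<noteq> 0 \<and> A $$ (j,0) \<noteq> 0")
  case False
  have "transpose_mat (1\<^sub>m (Suc n)) * A * 1\<^sub>m (Suc n) = A" using A by simp
  thus ?thesis using False by (intro exI[of _ "1\<^sub>m (Suc n)"] exI[of _ "A $$ (0,0)"], auto)
next
  case True
  then obtain j where j: "j < Suc n" "j \<noteq> 0" "A $$ (j,0) \<noteq> 0" by auto
  show ?thesis
  proof (cases "A $$ (0,0) = 0")
    case False
    from clear_step[OF A sym False] obtain W where W: "W \<in> carrier_mat (Suc n) (Suc n)" "det W \<noteq> 0"
      "\<forall>i<Suc n. (transpose_mat W * A * W) $$ (i,0) = (if i = 0 then A $$ (0,0) else 0)" by auto
    thus ?thesis by blast
  next
    case True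
    from nonzero_step[OF A sym True j] obtain T where T: "T \<in> carrier_mat (Suc n) (Suc n)" "det T \<noteq> 0"
      "(transpose_mat T * A * T) $$ (0,0) \<noteq> 0" by auto
    let ?M = "transpose_mat T * A * T"
    have Mc: "?M \<in> carrier_mat (Suc n) (Suc n)" using A T by auto
    have Ms: "transpose_mat ?M = ?M" by (rule conj_sym[OF A T(1) sym])
    from clear_step[OF Mc Ms T(3)] obtain W where W: "W \<in> carrier_mat (Suc n) (Suc n)" "det W \<noteq> 0"
      "\<forall>i<Suc n. (transpose_mat W * ?M * W) $$ (i,0) = (if i = 0 then ?M $$ (0,0) else 0)" by auto
    have "transpose_mat (T * W) * A * (T * W) = transpose_mat W * ?M * W" by (rule conj_mult[OF A T(1) W(1)])
    moreover have "det (T * W) \<noteq> 0" using T W by (simp add: det_mult[of _ "Suc n"])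
    moreover have "T * W \<in> carrier_mat (Suc n) (Suc n)" using T W by simp
    ultimately show ?thesis using W(3) by (intro exI[of _ "T * W"] exI[of _ "?M $$ (0,0)"], simp)
  qed
qed

lemma rat_diag: assumes "A \<in> carrier_mat n n" "transpose_mat A = A"
  shows "\<exists>xs. length xs = n \<and> gcong A (dg (xs :: 'a :: field_char_0 list))"
  using assms
proof (induct n arbitrary: A)
  case 0
  have "A = dg []" by (rule eq_matI, use 0 in auto)
  thus ?case using gcong_refl[OF 0(1)] by (intro exI[of _ "[]"], auto)
next
  case (Suc n A)
  from rat_split[OF Suc(2,3)] obtain W c where W: "W \<in> carrier_mat (Suc n) (Suc n)" "det W \<noteq> 0"
    "\<forall>i<Suc n. (transpose_mat W * A * W) $$ (i,0) = (if i = 0 then c else 0)" by auto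
  let ?M = "transpose_mat W * A * W"
  have Mc: "?M \<in> carrier_mat (Suc n) (Suc n)" using Suc(2) W by auto
  have Ms: "transpose_mat ?M = ?M" by (rule conj_sym[OF Suc(2) W(1) Suc(3)])
  note sp = split_first[OF Mc Ms, of c]
  have sp1: "?M = bd (dg [c]) (A3 ?M)" by (rule sp(1), use W(3) in auto)
  have sp2: "transpose_mat (A3 ?M) = A3 ?M" "A3 ?M \<in> carrier_mat n n" by (rule sp(2), use W(3) in auto,
     rule sp(3), use W(3) in auto)
  from Suc(1)[OF sp2(2) sp2(1)] obtain ys where ys: "length ys = n" "gcong (A3 ?M) (dg ys)" by auto
  have g1: "gcong A ?M" unfolding gcong_def using Suc(2) Mc W by blast
  have g2: "gcong (bd (dg [c]) (A3 ?M)) (bd (dg [c]) (dg ys))"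
    by (rule gcong_bd[OF gcong_refl[OF dg_carrier] ys(2)])
  have g1': "gcong A (bd (dg [c]) (A3 ?M))" using g1 by (simp only: sp1[symmetric])
  have "gcong A (dg (c # ys))" using gcong_trans[OF g1' g2] bd_dg[of "[c]" ys] by simp
  thus ?case using ys by (intro exI[of _ "c # ys"], auto)
qed



lemma sq_pos_vec: assumes "w \<in> carrier_vec n" "w \<noteq> 0\<^sub>v n"
  shows "0 < w \<bullet> (w :: real vec)"
proof -
  from assms obtain k where k: "k < n" "w $ k \<noteq> 0"
    by (metis (no_types, lifting) carrier_vecD eq_vecI index_zero_vec(1,2))
  have "w \<bullet> w = (\<Sum>i<n. w $ i * w $ i)" using assms by (simp add: scalar_prod_def atLeast0LessThan)
  also have "\<dots> > 0"
    by (rule sum_pos2[of _ k], use k in \<open>auto simp: zero_less_mult_iff linorder_neq_iff\<close>)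
  finally show ?thesis .
qed

lemma real_eigen: assumes A: "A \<in> carrier_mat (Suc n) (Suc n)" and sym: "transpose_mat A = (A :: real mat)"
  shows "\<exists>e u. u \<in> carrier_vec (Suc n) \<and> u \<bullet> u = 1 \<and> A *\<^sub>v u = e \<cdot>\<^sub>v u"
proof -
  let ?N = "Suc n"
  define Ac where "Ac = map_mat (of_real :: real \<Rightarrow> complex) A"
  have Acc: "Ac \<in> carrier_mat ?N ?N" unfolding Ac_def using A by simp
  have cp: "char_poly Ac = map_poly of_real (char_poly A)" unfolding Ac_def
    by (rule of_real_hom.char_poly_hom[OF A])
  have "degree (char_poly Ac) = ?N" using degree_monic_char_poly[OF Acc] by simp
  hence "\<not> constant (poly (char_poly Ac))" by (simp add: constant_degree)
  from fundamental_theorem_of_algebra[OF this] obtain lam where "poly (char_poly Ac) lam = 0" by auto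
  hence "eigenvalue Ac lam" using eigenvalue_root_char_poly[OF Acc] by simp
  then obtain v where ev: "eigenvector Ac v lam" unfolding eigenvalue_def by auto
  hence v: "v \<in> carrier_vec ?N" "v \<noteq> 0\<^sub>v ?N" "Ac *\<^sub>v v = lam \<cdot>\<^sub>v v" 
    unfolding eigenvector_def using Acc by auto
  have sy: "i < ?N \<Longrightarrow> k < ?N \<Longrightarrow> A $$ (k,i) = A $$ (i,k)" for i k
    using arg_cong[OF sym, of "\<lambda>X. X $$ (i,k)"] A by simp
  have Avi: "(\<Sum>k<?N. of_real (A $$ (i,k)) * v $ k) = lam * v $ i" if i: "i < ?N" for i
  proof -
    have "(Ac *\<^sub>v v) $ i = (\<Sum>k<?N. of_real (A $$ (i,k)) * v $ k)"
      using i A v(1) unfolding Ac_def by (simp add: scalar_prod_def atLeast0LessThan)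
    thus ?thesis using v(3) i v(1) by simp
  qed
  define S where "S = (\<Sum>i<?N. \<Sum>k<?N. cnj (v $ i) * of_real (A $$ (i,k)) * v $ k)"
  define Nv where "Nv = (\<Sum>i<?N. cnj (v $ i) * v $ i)"
  have S1: "S = lam * Nv" unfolding S_def Nv_def sum_distrib_left
  proof (rule sum.cong[OF refl])
    fix i assume "i \<in> {..<?N}"
    hence i: "i < ?N" by simp
    have "(\<Sum>k<?N. cnj (v $ i) * of_real (A $$ (i,k)) * v $ k) = cnj (v $ i) * (\<Sum>k<?N. of_real (A $$ (i,k)) * v $ k)"
      by (subst sum_distrib_left) (simp only: mult.assoc)
    also have "\<dots> = lam * (cnj (v $ i) * v $ i)" using Avi[OF i] by simp
    finally show "(\<Sum>k<?N. cnj (v $ i) * of_real (A $$ (i,k)) * v $ k) = lam * (cnj (v $ i) * v $ i)" .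
  qed
  have "cnj S = (\<Sum>i<?N. \<Sum>k<?N. v $ i * of_real (A $$ (i,k)) * cnj (v $ k))"
    unfolding S_def by (simp add: cnj_sum)
  also have "\<dots> = (\<Sum>k<?N. \<Sum>i<?N. v $ i * of_real (A $$ (i,k)) * cnj (v $ k))"
    by (rule sum.swap)
  also have "\<dots> = S" unfolding S_def
    by (rule sum.cong[OF refl], rule sum.cong[OF refl], auto simp: sy mult.commute mult.left_commute)
  finally have cS: "cnj S = S" .
  have Nv_real: "Nv = of_real (\<Sum>i<?N. (cmod (v $ i))\<^sup>2)" unfolding Nv_def of_real_sum
    by (rule sum.cong[OF refl]) (simp add: complex_norm_square[symmetric] mult.commute)
  from v(1,2) obtain k where k: "k < ?N" "v $ k \<noteq> 0"
    by (metis (no_types, lifting) carrier_vecD eq_vecI index_zero_vec(1,2))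
  define X where "X = (\<Sum>i<?N. (cmod (v $ i))\<^sup>2)"
  have "X > 0" unfolding X_def
    by (rule sum_pos2[of _ k], use k in auto)
  hence Nv0: "Nv \<noteq> 0" unfolding Nv_real X_def[symmetric] by simp
  have "cnj lam * Nv = lam * Nv" using cS unfolding S1 Nv_real X_def[symmetric] by simp
  hence "cnj lam = lam" using Nv0 by simp
  hence lr: "lam = of_real (Re lam)" by (metis Reals_cnj_iff complex_is_Real_iff of_real_Re)
  define r where "r = Re lam"
  have "poly (char_poly Ac) (of_real r) = 0"
    using \<open>poly (char_poly Ac) lam = 0\<close> unfolding r_def by (subst (asm) lr)
  hence "of_real (poly (char_poly A) r) = (0 :: complex)"
    unfolding cp of_real_hom.poly_map_poly .
  hence "poly (char_poly A) r = 0" by simp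
  hence "eigenvalue A r" using eigenvalue_root_char_poly[OF A] by simp
  then obtain w where "eigenvector A w r" unfolding eigenvalue_def by auto
  hence w: "w \<in> carrier_vec ?N" "w \<noteq> 0\<^sub>v ?N" "A *\<^sub>v w = r \<cdot>\<^sub>v w"
    unfolding eigenvector_def using A by auto
  have wp: "0 < w \<bullet> w" by (rule sq_pos_vec[OF w(1,2)])
  define u where "u = (1 / sqrt (w \<bullet> w)) \<cdot>\<^sub>v w"
  have uc: "u \<in> carrier_vec ?N" unfolding u_def using w by simp
  have "u \<bullet> u = (1 / sqrt (w \<bullet> w)) * ((1 / sqrt (w \<bullet> w)) * (w \<bullet> w))"
    unfolding u_def using w(1) by (simp add: smult_scalar_prod_distrib[of _ ?N] scalar_prod_smult_distrib[of _ ?N])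
  also have "\<dots> = 1" using wp by (simp add: field_simps)
  finally have uu: "u \<bullet> u = 1" .
  have "A *\<^sub>v u = r \<cdot>\<^sub>v u" unfolding u_def using mult_mat_vec[OF A w(1)] w(3)
    by (simp add: smult_smult_assoc mult.commute)
  thus ?thesis using uc uu by blast
qed



lemma householder: assumes u: "u \<in> carrier_vec N" "u \<bullet> u = (1 :: real)" and N: "0 < N"
  shows "\<exists>H. H \<in> carrier_mat N N \<and> transpose_mat H = H \<and> H * H = 1\<^sub>m N \<and> H *\<^sub>v unit_vec N 0 = u"
proof (cases "u = unit_vec N 0")
  case True
  thus ?thesis by (intro exI[of _ "1\<^sub>m N"], auto)
next
  case False
  define w where "w = u - unit_vec N 0"
  have wc: "w \<in> carrier_vec N" unfolding w_def using u by simp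
  have w0: "w \<noteq> 0\<^sub>v N"
  proof
    assume w0: "w = 0\<^sub>v N"
    have "u = unit_vec N 0"
    proof (rule eq_vecI)
      fix i assume "i < dim_vec (unit_vec N 0 :: real vec)" hence i: "i < N" by simp
      have "w $ i = u $ i - unit_vec N 0 $ i" unfolding w_def using i u by simp
      thus "u $ i = unit_vec N 0 $ i" using w0 i by simp
    qed (use u in simp)
    thus False using False by simp
  qed
  define c where "c = w \<bullet> w"
  have cpos: "c > 0" unfolding c_def by (rule sq_pos_vec[OF wc w0])
  define a where "a = 2 / c"
  define d where "d i j = (if i = j then 1 else (0::real))" for i j :: nat
  define H where "H = mat N N (\<lambda>(i,j). d i j - a * (w $ i * w $ j))"
  have Hc: "H \<in> carrier_mat N N" unfolding H_def by simp
  have wi: "i < N \<Longrightarrow> w $ i = u $ i - d i 0" for i unfolding w_def d_def using u N by auto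
  have csum: "c = (\<Sum>k<N. w $ k * w $ k)" unfolding c_def using wc by (simp add: scalar_prod_def atLeast0LessThan)
  have usum: "(\<Sum>k<N. u $ k * u $ k) = 1" using u by (simp add: scalar_prod_def atLeast0LessThan)
  have dsum: "(\<Sum>k<N. d i k * f k) = f i" if "i < N" for i f
  proof -
    have "(\<Sum>k<N. d i k * f k) = (\<Sum>k<N. if k = i then f k else 0)" by (rule sum.cong, auto simp: d_def)
    thus ?thesis using that by simp
  qed
  have dsum': "(\<Sum>k<N. f k * d k j) = f j" if "j < N" for j f
  proof -
    have "(\<Sum>k<N. f k * d k j) = (\<Sum>k<N. if k = j then f k else 0)" by (rule sum.cong, auto simp: d_def)
    thus ?thesis using that by simp
  qed
  have d1: "(\<Sum>k<N. d k 0) = 1" using dsum'[OF N, of "\<lambda>k. 1"] by simp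
  have "c = (\<Sum>k<N. u $ k * u $ k - 2 * (u $ k * d k 0) + d k 0)" unfolding csum
    by (rule sum.cong[OF refl], auto simp: wi d_def algebra_simps)
  also have "\<dots> = 1 - 2 * u $ 0 + 1" using N 
    by (simp add: sum.distrib sum_subtractf sum_distrib_left[symmetric] usum dsum'[OF N, of "\<lambda>k. u $ k"]
        d1 del: lessThan_Suc)
  finally have cval: "c = - 2 * w $ 0" using wi[OF N] by (simp add: d_def)
  have aw0: "a * w $ 0 = -1" unfolding a_def using cval cpos by (simp add: field_simps)
  have HT: "transpose_mat H = H" by (rule eq_matI, auto simp: H_def d_def mult.commute)
  have HH: "H * H = 1\<^sub>m N"
  proof (rule eq_matI)
    fix i j assume "i < dim_row (1\<^sub>m N)" "j < dim_col (1\<^sub>m N)"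
    hence i: "i < N" and j: "j < N" by auto
    have "(H * H) $$ (i,j) = (\<Sum>k<N. H $$ (i,k) * H $$ (k,j))"
      using i j Hc by (simp add: scalar_prod_def atLeast0LessThan)
    also have "\<dots> = (\<Sum>k<N. d i k * d k j - a * (w $ j * (d i k * w $ k)) - a * (w $ i * (w $ k * d k j))
        + a * a * (w $ i * w $ j) * (w $ k * w $ k))"
      by (rule sum.cong[OF refl], use i j in \<open>auto simp: H_def algebra_simps\<close>)
    also have "\<dots> = d i j - a * (w $ j * w $ i) - a * (w $ i * w $ j) + a * a * (w $ i * w $ j) * c"
      unfolding csum using i j
      by (simp add: sum.distrib sum_subtractf sum_distrib_left[symmetric] dsum dsum' del: lessThan_Suc)
    also have "a * a * (w $ i * w $ j) * c = (a * a * c) * (w $ i * w $ j)" by (simp add: algebra_simps)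
    also have "a * a * c = 2 * a" unfolding a_def using cpos by (simp add: field_simps)
    also have "d i j - a * (w $ j * w $ i) - a * (w $ i * w $ j) + 2 * a * (w $ i * w $ j) = d i j"
      by (simp add: algebra_simps)
    finally show "(H * H) $$ (i,j) = 1\<^sub>m N $$ (i,j)" using i j by (simp add: d_def)
  qed (use Hc in auto)
  have He: "H *\<^sub>v unit_vec N 0 = u"
  proof -
    have "H *\<^sub>v unit_vec N 0 = col H 0" by (rule mult_unit_vec[OF Hc N])
    also have "\<dots> = u"
    proof (rule eq_vecI)
      fix i assume "i < dim_vec u" hence i: "i < N" using u by simp
      have "col H 0 $ i = d i 0 - a * (w $ i * w $ 0)" using i N Hc by (simp add: H_def)
      also have "a * (w $ i * w $ 0) = w $ i * (a * w $ 0)" by (simp add: algebra_simps)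
      also have "d i 0 - w $ i * (a * w $ 0) = d i 0 + w $ i" unfolding aw0 by simp
      also have "\<dots> = u $ i" using wi[OF i] by simp
      finally show "col H 0 $ i = u $ i" .
    qed (use u Hc in auto)
    finally show ?thesis .
  qed
  show ?thesis using Hc HT HH He by blast
qed



lemma bd_one: "bd (1\<^sub>m n) (1\<^sub>m m) = (1\<^sub>m (n + m) :: 'a :: zero_neq_one mat)"
  by (rule eq_matI, auto simp: bd_def index_mat_four_block)

lemma dg_single_one: "dg [1] = (1\<^sub>m 1 :: 'a :: zero_neq_one mat)"
  by (rule eq_matI, auto)

lemma spectral: assumes "A \<in> carrier_mat n n" "transpose_mat A = (A :: real mat)"
  shows "\<exists>P xs. P \<in> carrier_mat n n \<and> transpose_mat P * P = 1\<^sub>m n \<and> length xs = n \<and> transpose_mat P * A * P = dg xs"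
  using assms
proof (induct n arbitrary: A)
  case 0
  have "A = dg []" by (rule eq_matI, use 0 in auto)
  moreover have "transpose_mat (1\<^sub>m 0) * (1\<^sub>m 0) = (1\<^sub>m 0 :: real mat)" by simp
  ultimately show ?case using 0 by (intro exI[of _ "1\<^sub>m 0"] exI[of _ "[]"], auto)
next
  case (Suc n A)
  let ?N = "Suc n"
  have A: "A \<in> carrier_mat ?N ?N" and sym: "transpose_mat A = A" by fact+
  from real_eigen[OF A sym] obtain e u where u: "u \<in> carrier_vec ?N" "u \<bullet> u = 1" "A *\<^sub>v u = e \<cdot>\<^sub>v u" by auto
  from householder[OF u(1,2)] obtain H where H: "H \<in> carrier_mat ?N ?N" "transpose_mat H = H"
    "H * H = 1\<^sub>m ?N" "H *\<^sub>v unit_vec ?N 0 = u" by auto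
  let ?M = "transpose_mat H * A * H"
  have Mc: "?M \<in> carrier_mat ?N ?N" using A H by auto
  have Ms: "transpose_mat ?M = ?M" by (rule conj_sym[OF A H(1) sym])
  have e0: "unit_vec ?N 0 \<in> carrier_vec ?N" by simp
  have Hu: "H *\<^sub>v u = unit_vec ?N 0"
  proof -
    have "H *\<^sub>v u = H *\<^sub>v (H *\<^sub>v unit_vec ?N 0)" unfolding H(4) ..
    also have "\<dots> = (H * H) *\<^sub>v unit_vec ?N 0" by (rule assoc_mult_mat_vec[symmetric, OF H(1) H(1) e0])
    finally show ?thesis unfolding H(3) by simp
  qed
  have "col ?M 0 = ?M *\<^sub>v unit_vec ?N 0" by (rule mult_unit_vec[symmetric, OF Mc], simp)
  also have "\<dots> = (transpose_mat H * A) *\<^sub>v (H *\<^sub>v unit_vec ?N 0)"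
    by (rule assoc_mult_mat_vec[of _ ?N ?N _ ?N], use A H e0 in auto)
  also have "\<dots> = H *\<^sub>v (A *\<^sub>v u)" unfolding H(4) H(2)
    by (rule assoc_mult_mat_vec[of _ ?N ?N _ ?N], use A H u in auto)
  also have "\<dots> = e \<cdot>\<^sub>v unit_vec ?N 0" unfolding u(3) mult_mat_vec[OF H(1) u(1)] Hu ..
  finally have colM: "col ?M 0 = e \<cdot>\<^sub>v unit_vec ?N 0" .
  have c: "?M $$ (i,0) = (if i = 0 then e else 0)" if i: "i < ?N" for i
  proof -
    have dr: "dim_row ?M = ?N" "dim_col ?M = ?N" using carrier_matD[OF Mc] by auto
    have "col ?M 0 $ i = ?M $$ (i,0)" by (rule index_col, use i dr in auto)
    hence "?M $$ (i,0) = col ?M 0 $ i" by simp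
    thus ?thesis unfolding colM using i by simp
  qed
  note sp = split_first[OF Mc Ms c]
  from Suc(1)[OF sp(3) sp(2)] obtain Q ys where Q: "Q \<in> carrier_mat n n" "transpose_mat Q * Q = 1\<^sub>m n"
    "length ys = n" "transpose_mat Q * A3 ?M * Q = dg ys" by auto
  let ?B = "bd (1\<^sub>m 1) Q"
  have Bc: "?B \<in> carrier_mat ?N ?N" using bd_carrier[of "1\<^sub>m 1" 1 Q n] Q by simp
  let ?P = "H * ?B"
  have Pc: "?P \<in> carrier_mat ?N ?N" using H Bc by simp
  have one: "1\<^sub>m ?N \<in> carrier_mat ?N ?N" by simp
  have PTc: "transpose_mat ?P \<in> carrier_mat ?N ?N" using Pc by simp
  have "transpose_mat ?P * 1\<^sub>m ?N = transpose_mat ?P" by (rule right_mult_one_mat[OF PTc])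
  hence "transpose_mat ?P * ?P = transpose_mat ?P * 1\<^sub>m ?N * ?P" by simp
  also have "\<dots> = transpose_mat ?B * (transpose_mat H * 1\<^sub>m ?N * H) * ?B" by (rule conj_mult[OF one H(1) Bc])
  also have "transpose_mat H * 1\<^sub>m ?N * H = 1\<^sub>m ?N" unfolding H(2) using H by simp
  also have "transpose_mat ?B * 1\<^sub>m ?N * ?B = transpose_mat ?B * bd (1\<^sub>m 1) (1\<^sub>m n) * ?B"
    by (subst bd_one, simp)
  also have "\<dots> = bd (transpose_mat (1\<^sub>m 1) * 1\<^sub>m 1 * 1\<^sub>m 1) (transpose_mat Q * 1\<^sub>m n * Q)"
    by (rule bd_conj, use Q in auto)
  also have "\<dots> = bd (1\<^sub>m 1) (1\<^sub>m n)" using Q by simp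
  also have "\<dots> = 1\<^sub>m ?N" by (subst bd_one, simp)
  finally have PP: "transpose_mat ?P * ?P = 1\<^sub>m ?N" .
  have "transpose_mat ?P * A * ?P = transpose_mat ?B * ?M * ?B" by (rule conj_mult[OF A H(1) Bc])
  also have "\<dots> = transpose_mat ?B * bd (dg [e]) (A3 ?M) * ?B" using sp(1) by simp
  also have "\<dots> = bd (transpose_mat (1\<^sub>m 1) * dg [e] * 1\<^sub>m 1) (transpose_mat Q * A3 ?M * Q)"
    by (rule bd_conj, use Q sp(3) in auto)
  also have "\<dots> = dg (e # ys)" using Q(4) bd_dg[of "[e]" ys] by simp
  finally show ?case using Pc PP Q(3) by (intro exI[of _ ?P] exI[of _ "e # ys"], auto)
qed

lemma spectral_sim: assumes A: "A \<in> carrier_mat n n" and sym: "transpose_mat A = (A :: real mat)"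
  shows "\<exists>xs. length xs = n \<and> similar_mat A (dg xs) \<and> gcong A (dg xs)"
proof -
  from spectral[OF A sym] obtain P xs where P: "P \<in> carrier_mat n n" "transpose_mat P * P = 1\<^sub>m n"
    "length xs = n" "transpose_mat P * A * P = dg xs" by auto
  have PT: "transpose_mat P \<in> carrier_mat n n" using P by simp
  have PP': "P * transpose_mat P = 1\<^sub>m n" by (rule mat_mult_left_right_inverse[OF PT P(1) P(2)])
  have D: "dg xs \<in> carrier_mat n n" using P(3) by auto
  have "P * dg xs * transpose_mat P = (P * transpose_mat P) * A * (P * transpose_mat P)"
    unfolding P(4)[symmetric] using A P(1) PT by (simp add: assoc_mult_mat[of _ n n _ n _ n])
  also have "\<dots> = A" unfolding PP' using A by simp
  finally have "A = P * dg xs * transpose_mat P" by simp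
  hence "similar_mat_wit A (dg xs) P (transpose_mat P)" unfolding similar_mat_wit_def Let_def
    using A D P(1) PT PP' P(2) by auto
  hence "similar_mat A (dg xs)" unfolding similar_mat_def by blast
  moreover have "gcong A (dg xs)" unfolding gcong_def using A D P(1) P(4) orth_det[OF P(1,2)] by blast
  ultimately show ?thesis using P(3) by blast
qed

lemma order_prod_lin: "order y (\<Prod>x\<leftarrow>xs. [:- x, 1:]) = count (mset xs) (y :: 'a :: idom)"
proof (induct xs)
  case Nil thus ?case by (simp add: order_0I)
next
  case (Cons x xs)
  have nz: "(\<Prod>x\<leftarrow>xs. [:- x, 1:]) \<noteq> (0 :: 'a poly)" unfolding prod_list_zero_iff by auto
  have "order y ([:- x, 1:] * (\<Prod>x\<leftarrow>xs. [:- x, 1:])) = order y [:- x, 1:] + order y (\<Prod>x\<leftarrow>xs. [:- x, 1:])"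
  proof (rule order_mult)
    have l0: "[:- x, 1:] \<noteq> (0 :: 'a poly)" by simp
    show "[:- x, 1:] * (\<Prod>x\<leftarrow>xs. [:- x, 1:]) \<noteq> 0" using l0 nz by (metis mult_eq_0_iff)
  qed
  thus ?case using Cons by (simp add: order_linear')
qed

lemma root_prod_lin: "poly (\<Prod>x\<leftarrow>xs. [:- x, 1:]) y = 0 \<longleftrightarrow> (y :: 'a :: idom) \<in> set xs"
  by (induct xs, auto)

lemma sum_order_count: fixes Q :: "'a :: idom \<Rightarrow> bool" and xs :: "'a list"
  defines "p \<equiv> (\<Prod>x\<leftarrow>xs. [:- x, 1:])"
  shows "(\<Sum>x\<in>{x. Q x \<and> poly p x = 0}. order x p) = length (filter Q xs)"
proof -
  have S: "{x. Q x \<and> poly p x = 0} = set_mset (mset (filter Q xs))" unfolding p_def root_prod_lin by auto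
  have "(\<Sum>x\<in>{x. Q x \<and> poly p x = 0}. order x p) = (\<Sum>x\<in>set_mset (mset (filter Q xs)). count (mset (filter Q xs)) x)"
    unfolding S by (rule sum.cong[OF refl], auto simp: p_def order_prod_lin)
  also have "\<dots> = size (mset (filter Q xs))" by (rule size_multiset_overloaded_eq[symmetric])
  also have "\<dots> = length (filter Q xs)" by (rule size_mset)
  finally show ?thesis .
qed

lemma signature_spec: assumes A: "A \<in> carrier_mat n n" and sim: "similar_mat (map_mat real_of_rat A) (dg xs)"
  shows "signature A = int (npos xs) - int (nneg xs)"
proof -
  have Ar: "map_mat real_of_rat A \<in> carrier_mat n n" using A by simp
  have D: "dg xs \<in> carrier_mat (length xs) (length xs)" by simp
  have "char_poly (map_mat real_of_rat A) = char_poly (dg xs)" by (rule char_poly_similar[OF sim])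
  also have "\<dots> = (\<Prod>a\<leftarrow>diag_mat (dg xs). [:- a, 1:])"
    by (rule char_poly_upper_triangular[OF D], auto simp: upper_triangular_def)
  also have "diag_mat (dg xs) = xs" by (rule nth_equalityI, auto simp: diag_mat_def)
  finally have cp: "char_poly (map_mat real_of_rat A) = (\<Prod>a\<leftarrow>xs. [:- a, 1:])" .
  show ?thesis unfolding signature_def Let_def cp sum_order_count npos_def nneg_def ..
qed



lemma euler4: fixes x1 :: "'a::comm_ring" shows
  "(x1*x1 + x2*x2 + x3*x3 + x4*x4) * (y1*y1 + y2*y2 + y3*y3 + y4*y4) =
   (x1*y1 - x2*y2 - x3*y3 - x4*y4) * (x1*y1 - x2*y2 - x3*y3 - x4*y4) +
   (x1*y2 + x2*y1 + x3*y4 - x4*y3) * (x1*y2 + x2*y1 + x3*y4 - x4*y3) +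
   (x1*y3 - x2*y4 + x3*y1 + x4*y2) * (x1*y3 - x2*y4 + x3*y1 + x4*y2) +
   (x1*y4 + x2*y3 - x3*y2 + x4*y1) * (x1*y4 + x2*y3 - x3*y2 + x4*y1)"
  by (simp only: algebra_simps)

definition s4 :: "rat \<Rightarrow> bool" where
  "s4 a \<longleftrightarrow> (\<exists>x1 x2 x3 x4. a = x1*x1 + x2*x2 + x3*x3 + x4*x4)"

lemma s4_mult: "s4 a \<Longrightarrow> s4 b \<Longrightarrow> s4 (a * b)"
  unfolding s4_def by (metis euler4)

lemma s4_div_sq: assumes "s4 a" "m \<noteq> 0" shows "s4 (a / (m * m))"
proof -
  from assms obtain x1 x2 x3 x4 where a: "a = x1*x1 + x2*x2 + x3*x3 + x4*x4" unfolding s4_def by auto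
  have "a / (m * m) = (x1/m)*(x1/m) + (x2/m)*(x2/m) + (x3/m)*(x3/m) + (x4/m)*(x4/m)"
    unfolding a using assms(2) by (simp add: field_simps)
  thus ?thesis unfolding s4_def by blast
qed

lemma pigeon: assumes p: "prime (p :: int)" "odd p"
  shows "\<exists>x y. 0 \<le> x \<and> 0 \<le> y \<and> 2 * x < p \<and> 2 * y < p \<and> p dvd (x*x + y*y + 1)"
proof -
  define h where "h = (p - 1) div 2"
  have p2: "p \<ge> 2" using prime_ge_2_int[OF p(1)] .
  have ph: "p = 2 * h + 1" unfolding h_def using p(2) by (auto elim!: oddE)
  define f where "f x = (x * x) mod p" for x
  define g where "g y = (- 1 - y * y) mod p" for y
  have sq_inj: "x = x'" if "x \<in> {0..h}" "x' \<in> {0..h}" "(x * x) mod p = (x' * x') mod p" for x x'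
  proof -
    have "p dvd (x - x') * (x + x')"
      using that(3) by (metis mod_eq_dvd_iff square_diff_square_factored mult.commute)
    hence "p dvd (x - x') \<or> p dvd (x + x')" using p(1) prime_dvd_mult_iff by blast
    thus ?thesis
    proof
      assume d: "p dvd x - x'"
      have "\<bar>x - x'\<bar> < p" using that(1,2) ph by auto
      show ?thesis
      proof (rule ccontr)
        assume "x \<noteq> x'"
        hence "x - x' \<noteq> 0" by simp
        from dvd_imp_le_int[OF this d] have "\<bar>p\<bar> \<le> \<bar>x - x'\<bar>" .
        thus False using \<open>\<bar>x - x'\<bar> < p\<close> by simp
      qed
    next
      assume d: "p dvd x + x'"
      have "0 \<le> x + x'" "x + x' < p" using that(1,2) ph by auto
      have "x + x' = 0"
      proof (rule ccontr)
        assume "x + x' \<noteq> 0"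
        from dvd_imp_le_int[OF this d] have "\<bar>p\<bar> \<le> \<bar>x + x'\<bar>" .
        thus False using \<open>0 \<le> x + x'\<close> \<open>x + x' < p\<close> by simp
      qed
      thus ?thesis using that(1,2) by auto
    qed
  qed
  have injf: "inj_on f {0..h}" unfolding inj_on_def f_def using sq_inj by blast
  have injg: "inj_on g {0..h}" unfolding inj_on_def g_def
  proof (intro ballI impI)
    fix x x' assume x: "x \<in> {0..h}" "x' \<in> {0..h}" and e: "(- 1 - x * x) mod p = (- 1 - x' * x') mod p"
    have "(x * x) mod p = (x' * x') mod p"
      using e by (metis mod_diff_right_eq minus_diff_eq add.commute diff_add_cancel mod_add_left_eq
          mod_minus_eq neg_equal_iff_equal mod_diff_left_eq)
    thus "x = x'" using sq_inj x by blast
  qed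
  have sub: "f ` {0..h} \<subseteq> {0..<p}" "g ` {0..h} \<subseteq> {0..<p}" unfolding f_def g_def using p2 by auto
  have cf: "card (f ` {0..h}) = nat (h + 1)" using card_image[OF injf] ph by simp
  have cg: "card (g ` {0..h}) = nat (h + 1)" using card_image[OF injg] ph by simp
  have "f ` {0..h} \<inter> g ` {0..h} \<noteq> {}"
  proof
    assume disj: "f ` {0..h} \<inter> g ` {0..h} = {}"
    have "card (f ` {0..h} \<union> g ` {0..h}) = card (f ` {0..h}) + card (g ` {0..h})"
      by (rule card_Un_disjoint[OF _ _ disj], auto)
    also have "\<dots> = nat p + 1" unfolding cf cg using ph p2 by simp
    finally have "card (f ` {0..h} \<union> g ` {0..h}) = nat p + 1" .
    moreover have "card (f ` {0..h} \<union> g ` {0..h}) \<le> card {0..<p}"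
      by (rule card_mono, simp, use sub in blast)
    ultimately show False by simp
  qed
  then obtain z where z: "z \<in> f ` {0..h}" "z \<in> g ` {0..h}" by blast
  then obtain x y where xy: "x \<in> {0..h}" "y \<in> {0..h}" "f x = g y" by (metis imageE)
  have "(x * x) mod p = (- 1 - y * y) mod p" using xy(3) unfolding f_def g_def .
  hence "p dvd (x * x) - (- 1 - y * y)" by (simp add: mod_eq_dvd_iff)
  hence "p dvd (x*x + y*y + 1)" by (simp add: algebra_simps)
  thus ?thesis using xy ph by (intro exI[of _ x] exI[of _ y], auto)
qed

lemma four_sq_nat: "0 < N \<Longrightarrow> s4 (of_nat N)"
proof (induct N rule: less_induct)
  case (less N)
  show ?case
  proof (cases "N = 1")
    case True thus ?thesis unfolding s4_def by (intro exI[of _ 1] exI[of _ 0], simp)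
  next
    case N1: False
    hence N2: "N \<ge> 2" using less(2) by auto
    show ?thesis
    proof (cases "prime N")
      case False
      then obtain a where a: "a dvd N" "a \<noteq> 1" "a \<noteq> N" using N2 unfolding prime_nat_iff by auto
      then obtain b where b: "N = a * b" by (auto elim: dvdE)
      have a0: "a > 0" and b0: "b > 0" using b less(2) by (auto intro: Nat.gr0I)
      have "a < N" using a b b0 by (metis dvd_imp_le less(2) a(1) le_neq_implies_less)
      moreover have "b < N" using a b a0 by (metis a(2) less_add_same_cancel1 less_one linorder_neqE_nat
          mult_less_cancel2 nat_mult_1 not_less_zero b0)
      ultimately have "s4 (of_nat a)" "s4 (of_nat b)" using less(1) a0 b0 by auto
      from s4_mult[OF this] show ?thesis unfolding b by simp
    next
      case True
      show ?thesis
      proof (cases "N = 2")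
        case True thus ?thesis unfolding s4_def by (intro exI[of _ 1] exI[of _ 1] exI[of _ 0], simp)
      next
        case False
        have pi: "prime (int N)" using True by simp
        have oi: "odd (int N)" using True False prime_odd_nat[of N] N2 by (simp add: prime_ge_2_nat)
        from pigeon[OF pi oi] obtain x y where xy: "0 \<le> x" "0 \<le> y" "2 * x < int N" "2 * y < int N"
          "int N dvd x * x + y * y + 1" by auto
        then obtain m where m: "x * x + y * y + 1 = int N * m" by (auto elim: dvdE)
        have mpos: "m > 0" using m less(2) xy(1,2)
          by (smt (verit) mult_nonneg_nonneg zero_less_mult_iff of_nat_0_less_iff)
        have "4 * (x * x + y * y + 1) < 4 * (int N * int N)"
        proof -
          have "(2*x) * (2*x) < int N * int N" using xy(1,3) by (intro mult_strict_mono, auto)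
          moreover have "(2*y) * (2*y) < int N * int N" using xy(2,4) by (intro mult_strict_mono, auto)
          moreover have "2 * 2 \<le> int N * int N" by (rule mult_mono, use N2 in auto)
          moreover have "4 * (x * x + y * y + 1) = (2*x) * (2*x) + (2*y) * (2*y) + 4" by (simp add: algebra_simps)
          ultimately show ?thesis by linarith
        qed
        hence "int N * m < int N * int N" unfolding m[symmetric] by simp
        hence mN: "m < int N" using less(2) by (simp add: mult_less_cancel_left)
        define mn where "mn = nat m"
        have mn: "int mn = m" "mn < N" "0 < mn" unfolding mn_def using mpos mN by auto
        have "s4 (of_nat mn)" using less(1)[OF mn(2) mn(3)] .
        moreover have "s4 (of_int x * of_int x + of_int y * of_int y + 1 * 1 + 0 * 0)" unfolding s4_def by blast
        ultimately have "s4 ((of_int x * of_int x + of_int y * of_int y + 1 * 1 + 0 * 0) * of_nat mn)"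
          using s4_mult by blast
        from s4_div_sq[OF this, of "of_nat mn"] have "s4 ((of_int x * of_int x + of_int y * of_int y + 1) * of_nat mn / (of_nat mn * of_nat mn))"
          using mn by simp
        moreover have "(of_int x * of_int x + of_int y * of_int y + 1) * of_nat mn / (of_nat mn * of_nat mn) = (of_nat N :: rat)"
        proof -
          have "(of_int (x * x + y * y + 1) :: rat) = of_nat N * of_nat mn" unfolding m mn(1)[symmetric] by simp
          hence "(of_int x * of_int x + of_int y * of_int y + 1 :: rat) = of_nat N * of_nat mn" by simp
          thus ?thesis using mn(3) by (simp add: field_simps)
        qed
        ultimately show ?thesis by simp
      qed
    qed
  qed
qed

lemma four_sq_rat: assumes "(a :: rat) > 0" shows "\<exists>x1 x2 x3 x4. a = x1*x1 + x2*x2 + x3*x3 + x4*x4"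
proof -
  obtain r s where rs: "quotient_of a = (r, s)" by (cases "quotient_of a")
  have a: "a = of_int r / of_int s" and s: "s > 0" using quotient_of_div[OF rs] quotient_of_denom_pos[OF rs] by auto
  have r: "r > 0" using assms a s by (simp add: zero_less_divide_iff)
  have "s4 (of_nat (nat (r * s)))" by (rule four_sq_nat, use r s in simp)
  hence "s4 (of_int r * of_int s)" using r s by simp
  from s4_div_sq[OF this, of "of_int s"] have "s4 (of_int r * of_int s / (of_int s * of_int s))" using s by simp
  moreover have "of_int r * of_int s / (of_int s * of_int s) = a" unfolding a using s by simp
  ultimately show ?thesis unfolding s4_def by simp
qed



lemma hyp_carrier[simp]: "hyp m \<in> carrier_mat (2*m) (2*m)" unfolding hyp_def by simp

lemma hyp_Suc: "hyp (Suc m) = bd (hyp m) (hyp 1)"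
proof (rule eq_matI)
  fix i j assume "i < dim_row (bd (hyp m) (hyp 1))" "j < dim_col (bd (hyp m) (hyp 1))"
  hence i: "i < 2*m + 2" and j: "j < 2*m + 2" unfolding bd_def hyp_def by auto
  show "hyp (Suc m) $$ (i,j) = bd (hyp m) (hyp 1) $$ (i,j)"
    using i j unfolding bd_def hyp_def by (auto simp: index_mat_four_block, presburger+)
qed (auto simp: bd_def hyp_def)

lemma hyp1_gcong: "gcong (hyp 1) (dg [1, -1])"
proof -
  define P where "P = mat 2 2 (\<lambda>(i,j). if i = 0 then 1 else if j = 0 then 1/2 else (-1/2 :: rat))"
  have Pc: "P \<in> carrier_mat 2 2" unfolding P_def by simp
  have H: "hyp 1 \<in> carrier_mat 2 2" using hyp_carrier[of 1] by simp
  have e: "transpose_mat P * hyp 1 * P = dg [1, -1]"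
  proof (rule eq_matI)
    fix i j assume "i < dim_row (dg [1, -1 :: rat])" "j < dim_col (dg [1, -1 :: rat])"
    hence i: "i < 2" and j: "j < 2" by auto
    have "(transpose_mat P * hyp 1 * P) $$ (i,j) = (\<Sum>l<2. P $$ (l,i) * (\<Sum>k<2. hyp 1 $$ (l,k) * P $$ (k,j)))"
      using i j Pc H by (simp add: scalar_prod_def atLeast0LessThan)
    also have "\<dots> = dg [1, -1] $$ (i,j)"
      using i j unfolding P_def hyp_def by (auto simp: less_2_cases_iff numeral_2_eq_2)
    finally show "(transpose_mat P * hyp 1 * P) $$ (i,j) = dg [1, -1] $$ (i,j)" .
  qed (use Pc in auto)
  show ?thesis by (rule gcongI[OF H Pc e], simp add: det_dg)
qed

definition hk :: "nat \<Rightarrow> rat list" where "hk m = concat (replicate m [1, -1])"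

lemma hk_Suc: "hk (Suc m) = hk m @ [1, -1]"
  unfolding hk_def by (simp add: replicate_append_same[symmetric])

lemma hyp_gcong: "gcong (hyp m) (dg (hk m))"
proof (induct m)
  case 0
  have "hyp 0 = dg (hk 0)" by (rule eq_matI, auto simp: hyp_def hk_def)
  thus ?case using gcong_refl[OF hyp_carrier[of 0]] by simp
next
  case (Suc m)
  have "gcong (bd (hyp m) (hyp 1)) (bd (dg (hk m)) (dg [1, -1]))" by (rule gcong_bd[OF Suc hyp1_gcong])
  thus ?case unfolding hyp_Suc hk_Suc bd_dg .
qed

lemma npos_append: "npos (xs @ ys) = npos xs + npos ys" unfolding npos_def by simp
lemma nneg_append: "nneg (xs @ ys) = nneg xs + nneg ys" unfolding nneg_def by simp
lemma npos_hk: "npos (hk m) = m" by (induct m, auto simp: hk_Suc npos_append, auto simp: npos_def hk_def)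
lemma nneg_hk: "nneg (hk m) = m" by (induct m, auto simp: hk_Suc nneg_append, auto simp: nneg_def hk_def)

lemma npos_nneg_le: "npos xs + nneg xs \<le> length xs"
  unfolding npos_def nneg_def by (induct xs, auto)

lemma mset_hk: "mset (hk m) = replicate_mset m 1 + replicate_mset m (-1)"
  by (induct m, auto simp: hk_Suc, auto simp: hk_def)

definition qm :: "rat \<Rightarrow> rat \<Rightarrow> rat \<Rightarrow> rat \<Rightarrow> rat mat" where
  "qm x1 x2 x3 x4 = mat 4 4 (\<lambda>(i,j). [[x1,-x2,-x3,-x4],[x2,x1,-x4,x3],[x3,x4,x1,-x2],[x4,-x3,x2,x1]] ! i ! j)"

lemma less4: "(i :: nat) < 4 \<longleftrightarrow> i = 0 \<or> i = 1 \<or> i = 2 \<or> i = 3" by auto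

lemma quat_conj: assumes a: "a = x1*x1 + x2*x2 + x3*x3 + x4*x4"
  shows "transpose_mat (qm x1 x2 x3 x4) * dg [e,e,e,e] * qm x1 x2 x3 x4 = dg [e*a, e*a, e*a, e*a]"
proof (rule eq_matI)
  let ?P = "qm x1 x2 x3 x4"
  have Pc: "?P \<in> carrier_mat 4 4" unfolding qm_def by simp
  fix i j assume "i < dim_row (dg [e*a, e*a, e*a, e*a])" "j < dim_col (dg [e*a, e*a, e*a, e*a])"
  hence i: "i < 4" and j: "j < 4" by auto
  have D: "dg [e,e,e,e] \<in> carrier_mat 4 4" using dg_carrier[of "[e,e,e,e]"] by (simp add: numeral_eq_Suc)
  have "(transpose_mat ?P * dg [e,e,e,e] * ?P) $$ (i,j) = col ?P i \<bullet> (dg [e,e,e,e] *\<^sub>v col ?P j)"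
    by (rule quad_index[OF Pc D i j])
  also have "\<dots> = ?P $$ (0,i) * (e * ?P $$ (0,j)) + ?P $$ (1,i) * (e * ?P $$ (1,j)) + ?P $$ (2,i) * (e * ?P $$ (2,j)) + ?P $$ (3,i) * (e * ?P $$ (3,j))"
    using i j Pc by (simp add: scalar_prod_def atLeast0LessThan dg_mult_vec_index numeral_eq_Suc del: index_mult_mat_vec)
  also have "\<dots> = dg [e*a, e*a, e*a, e*a] $$ (i,j)"
    using i j unfolding less4 qm_def a 
    by (auto simp: algebra_simps)
  finally show "(transpose_mat ?P * dg [e,e,e,e] * ?P) $$ (i,j) = dg [e*a, e*a, e*a, e*a] $$ (i,j)" .
qed (auto simp: qm_def)

lemma quat_gcong: assumes "(d :: rat) \<noteq> 0" shows "gcong (dg [d,d,d,d]) (dg (replicate 4 (sgn d)))"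
proof -
  have ap: "\<bar>d\<bar> > 0" using assms by simp
  from four_sq_rat[OF ap] obtain x1 x2 x3 x4 where a: "\<bar>d\<bar> = x1*x1 + x2*x2 + x3*x3 + x4*x4" by auto
  have e: "transpose_mat (qm x1 x2 x3 x4) * dg [sgn d, sgn d, sgn d, sgn d] * qm x1 x2 x3 x4 = dg [d,d,d,d]"
    using quat_conj[OF a, of "sgn d"] by (simp add: sgn_mult_abs)
  have D: "dg [sgn d, sgn d, sgn d, sgn d] \<in> carrier_mat 4 4" using dg_carrier[of "[sgn d, sgn d, sgn d, sgn d]"] by (simp add: numeral_eq_Suc)
  have Q: "qm x1 x2 x3 x4 \<in> carrier_mat 4 4" by (simp add: qm_def)
  have dt: "det (dg [d,d,d,d]) \<noteq> 0" using assms by (simp add: det_dg)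
  have "gcong (dg [sgn d, sgn d, sgn d, sgn d]) (dg [d,d,d,d])"
    by (rule gcongI[OF D Q e dt])
  from gcong_sym[OF this] show ?thesis by (simp add: numeral_eq_Suc)
qed



lemma rep_plus: "replicate_mset (a + b) x = replicate_mset a x + replicate_mset b x"
  by (induct a, auto)

lemma gcong_det: assumes "gcong A B" "det A \<noteq> 0" shows "det B \<noteq> (0 :: 'a :: field)"
proof -
  from assms obtain n P where *: "A \<in> carrier_mat n n" "B \<in> carrier_mat n n"
      "P \<in> carrier_mat n n" "det P \<noteq> 0" "transpose_mat P * A * P = B" unfolding gcong_def by auto
  have "det B = det (transpose_mat P * A) * det P" unfolding *(5)[symmetric]
    by (rule det_mult, use * in auto)
  also have "det (transpose_mat P * A) = det (transpose_mat P) * det A"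
    by (rule det_mult, use * in auto)
  also have "det (transpose_mat P) = det P" by (rule det_transpose, fact)
  finally show ?thesis using *(4) assms(2) by simp
qed

lemma npos_map_of_rat: "npos (map (of_rat :: rat \<Rightarrow> real) xs) = npos xs"
  unfolding npos_def by (induct xs, auto)
lemma nneg_map_of_rat: "nneg (map (of_rat :: rat \<Rightarrow> real) xs) = nneg xs"
  unfolding nneg_def by (induct xs, auto)

lemma quat_blocks: assumes "0 \<notin> set (ds :: rat list)"
  shows "gcong (dg (concat (map (\<lambda>d. [d,d,d,d]) ds))) (dg (concat (map (\<lambda>d. replicate 4 (sgn d)) ds)))"
  using assms
proof (induct ds)
  case Nil
  have "gcong (dg []) (dg ([] :: rat list))" by (rule gcong_refl[OF dg_carrier])
  thus ?case by simp
next
  case (Cons d ds)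
  have "gcong (bd (dg [d,d,d,d]) (dg (concat (map (\<lambda>d. [d,d,d,d]) ds))))
      (bd (dg (replicate 4 (sgn d))) (dg (concat (map (\<lambda>d. replicate 4 (sgn d)) ds))))"
    by (rule gcong_bd[OF quat_gcong Cons(1)], use Cons(2) in auto)
  thus ?case unfolding bd_dg by simp
qed

lemma mset_quad: fixes ds :: "rat list" shows "mset (concat (map (\<lambda>d. [d,d,d,d]) ds)) = mset ds + mset ds + mset ds + mset ds"
  by (induct ds, auto)

lemma mset_sgn: assumes "0 \<notin> set (ds :: rat list)"
  shows "mset (concat (map (\<lambda>d. replicate 4 (sgn d)) ds)) =
    replicate_mset (4 * npos ds) 1 + replicate_mset (4 * nneg ds) (-1)"
  using assms
proof (induct ds)
  case (Cons d ds)
  show ?case using Cons by (cases "d > 0", auto simp: npos_def nneg_def numeral_eq_Suc)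
qed (simp add: npos_def nneg_def)

lemma rat_diag_nonsing: assumes "nonsing_sym A"
  shows "\<exists>ds. length ds = dim_row A \<and> gcong A (dg ds) \<and> 0 \<notin> set ds"
proof -
  from assms have A: "A \<in> carrier_mat (dim_row A) (dim_row A)" "transpose_mat A = A" "det A \<noteq> 0"
    unfolding nonsing_sym_def by auto
  from rat_diag[OF A(1,2)] obtain ds where ds: "length ds = dim_row A" "gcong A (dg ds)" by auto
  have "det (dg ds) \<noteq> 0" by (rule gcong_det[OF ds(2) A(3)])
  hence "0 \<notin> set ds" by (auto simp: det_dg prod_list_zero_iff)
  thus ?thesis using ds by blast
qed

theorem mainTheorem1:
  fixes A :: "rat mat"
  assumes "nonsing_sym A"
  shows "int (witt_rank (orth_sum (orth_sum A A) (orth_sum A A))) = 4 * \<bar>signature A\<bar>"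
proof -
  let ?n = "dim_row A"
  have A: "A \<in> carrier_mat ?n ?n" "transpose_mat A = A" using assms unfolding nonsing_sym_def by auto
  from rat_diag_nonsing[OF assms] obtain ds where ds: "length ds = ?n" "gcong A (dg ds)" "0 \<notin> set ds" by auto
  define p where "p = npos ds"
  define q where "q = nneg ds"
  let ?Ar = "map_mat (real_of_rat) A"
  have Ar1: "?Ar \<in> carrier_mat ?n ?n" using A(1) by (rule map_carrier_mat[THEN iffD2])
  have Ar2: "transpose_mat ?Ar = ?Ar" unfolding map_mat_transpose using A(2) by simp
  note Ar = Ar1 Ar2
  from spectral_sim[OF Ar] obtain xs where xs: "length xs = ?n" "similar_mat ?Ar (dg xs)" "gcong ?Ar (dg xs)" by auto
  have sig: "signature A = int (npos xs) - int (nneg xs)" by (rule signature_spec[OF A(1) xs(2)])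
  have md: "map_mat real_of_rat (dg ds) = dg (map real_of_rat ds)" by (rule map_dg) simp
  have gr: "gcong ?Ar (map_mat real_of_rat (dg ds))" by (rule gcong_of_rat[OF ds(2)])
  have "gcong ?Ar (dg (map of_rat ds))" using gr unfolding md .
  hence g: "gcong (dg (map (of_rat :: rat \<Rightarrow> real) ds)) (dg xs)" by (rule gcong_trans[OF gcong_sym xs(3)])
  have sigpq: "signature A = int p - int q" unfolding sig p_def q_def
    using sylv_npos[OF g] sylv_nneg[OF g] by (simp add: npos_map_of_rat nneg_map_of_rat)
  define F where "F = orth_sum (orth_sum A A) (orth_sum A A)"
  define D4 where "D4 = (ds @ ds) @ (ds @ ds)"
  have gF: "gcong F (dg D4)" unfolding F_def D4_def orth_sum_bd bd_dg[symmetric]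
    by (intro gcong_bd ds(2))
  have Fc: "F \<in> carrier_mat (?n + ?n + (?n + ?n)) (?n + ?n + (?n + ?n))" unfolding F_def orth_sum_bd
    by (rule bd_carrier[OF bd_carrier[OF A(1) A(1)] bd_carrier[OF A(1) A(1)]])
  have pD4: "npos D4 = 4 * p" "nneg D4 = 4 * q" unfolding D4_def p_def q_def by (simp_all add: npos_append nneg_append)
  define K where "K = min (4 * p) (4 * q)"
  define m where "m = (if q \<le> p then 4 * p - 4 * q else 4 * q - 4 * p)"
  define c where "c = (if q \<le> p then 1 else (-1 :: rat))"
  define E where "E = concat (map (\<lambda>d. replicate 4 (sgn d)) ds)"
  define T where "T = replicate m c @ hk K"
  have g1: "gcong (dg D4) (dg (concat (map (\<lambda>d. [d,d,d,d]) ds)))"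
    by (rule gcong_perm, simp add: D4_def mset_quad)
  have g2: "gcong (dg (concat (map (\<lambda>d. [d,d,d,d]) ds))) (dg E)" unfolding E_def by (rule quat_blocks[OF ds(3)])
  have "mset E = mset T"
  proof (cases "q \<le> p")
    case True
    have "4 * p = (4 * p - 4 * q) + 4 * q" using True by simp
    hence "replicate_mset (4 * p) (1::rat) = replicate_mset (4 * p - 4 * q) 1 + replicate_mset (4 * q) 1"
      by (metis rep_plus)
    thus ?thesis using True
      unfolding E_def mset_sgn[OF ds(3)] T_def mset_append mset_hk K_def m_def c_def p_def[symmetric] q_def[symmetric]
      by simp
  next
    case False
    have "4 * q = (4 * q - 4 * p) + 4 * p" using False by simp
    hence "replicate_mset (4 * q) (-1::rat) = replicate_mset (4 * q - 4 * p) (-1) + replicate_mset (4 * p) (-1)"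
      by (metis rep_plus)
    thus ?thesis using False
      unfolding E_def mset_sgn[OF ds(3)] T_def mset_append mset_hk K_def m_def c_def p_def[symmetric] q_def[symmetric]
      by (simp add: add_ac)
  qed
  hence g3: "gcong (dg E) (dg T)" by (rule gcong_perm)
  have g4: "gcong (dg T) (bd (dg (replicate m c)) (hyp K))" unfolding T_def bd_dg[symmetric]
    by (rule gcong_bd[OF gcong_refl[OF dg_carrier] gcong_sym[OF hyp_gcong]])
  have gFC: "gcong F (orth_sum (dg (replicate m c)) (hyp K))" unfolding orth_sum_bd
    by (rule gcong_trans[OF gF gcong_trans[OF g1 gcong_trans[OF g2 gcong_trans[OF g3 g4]]]])
  let ?C = "dg (replicate m c)"
  have Cc: "?C \<in> carrier_mat m m" using dg_carrier[of "replicate m c"] unfolding length_replicate .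
  have Cd: "det ?C \<noteq> 0" unfolding det_dg c_def by simp
  have Cdr: "dim_row ?C = m" by simp
  have Cns: "nonsing_sym ?C" unfolding nonsing_sym_def Cdr using Cc Cd by simp
  have "orth_sum F (hyp 0) = F" unfolding orth_sum_bd by (rule bd_empty[OF Fc], rule hyp_carrier[of 0, simplified])
  hence "isometric (orth_sum ?C (hyp K)) (orth_sum F (hyp 0))" unfolding isometric_gcong using gcong_sym[OF gFC] by simp
  hence Cw: "witt_equiv ?C F" unfolding witt_equiv_def by blast
  have lower: "m \<le> n'" if B: "B \<in> carrier_mat n' n'" "nonsing_sym B" "witt_equiv B F" for B n'
  proof -
    from B(3) obtain k l where kl: "gcong (bd B (hyp k)) (bd F (hyp l))"
      unfolding witt_equiv_def isometric_gcong orth_sum_bd by auto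
    from rat_diag_nonsing[OF B(2)] obtain bs where bs: "length bs = dim_row B" "gcong B (dg bs)" by auto
    have lb: "length bs = n'" using bs(1) B(1) by simp
    have "gcong (bd B (hyp k)) (dg (bs @ hk k))" unfolding bd_dg[symmetric] by (rule gcong_bd[OF bs(2) hyp_gcong])
    moreover have "gcong (bd F (hyp l)) (dg (D4 @ hk l))" unfolding bd_dg[symmetric] by (rule gcong_bd[OF gF hyp_gcong])
    ultimately have "gcong (dg (bs @ hk k)) (dg (D4 @ hk l))" using kl by (meson gcong_sym gcong_trans)
    from sylv_npos[OF this] sylv_nneg[OF this]
    have e: "npos bs + k = 4 * p + l" "nneg bs + k = 4 * q + l"
      by (simp_all add: npos_append nneg_append npos_hk nneg_hk pD4)
    have "npos bs + nneg bs \<le> n'" using npos_nneg_le[of bs] lb by simp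
    thus ?thesis using e unfolding m_def by auto
  qed
  have wr: "witt_rank F = m" unfolding witt_rank_def
  proof (rule Least_equality)
    show "\<exists>B. B \<in> carrier_mat m m \<and> nonsing_sym B \<and> witt_equiv B F" using Cc Cns Cw by blast
  next
    fix n' assume "\<exists>B. B \<in> carrier_mat n' n' \<and> nonsing_sym B \<and> witt_equiv B F"
    thus "m \<le> n'" using lower by blast
  qed
  show ?thesis unfolding F_def[symmetric] wr sigpq m_def by auto
qed


end
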